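(* Let $A$ be the UHF algebra given by the $C^*$-closure of $\bigotimes_{n\ge1}M_2$, with local algebras $A_I=\bigotimes_{i\in I}M_2$ for finite $I\subset\mathbf{N}$. Let $(\lambda_i)_{i\ge1}$ be positive numbers with $\lambda_n\ge2(\lambda_1+\dots+\lambda_{n-1})+6^n$ for all $n$. Let $h_i\in A_{\{i\}}$ be the matrix $\begin{pmatrix}\lambda_i&0\\0&0\end{pmatrix}$ at site $i$, $H_n=\sum_{i=1}^nh_i$, $\delta_n(x)=i[H_n,x]$, and let $\alpha$ be the flow $\alpha_t(x)=\lim_{n\to\infty}e^{itH_n}xe^{-itH_n}$ with generator $\delta_\alpha$. Then for all $x\in D(\delta_\alpha^2)$ and all $k\le l$, \[\|\delta_\alpha(x)\|\le\|\delta_\alpha^2(x)\|\quad\text{and}\quad\|\delta_l(x)-\delta_k(x)\|\le2^{-k}\|\delta_\alpha^2(x)\|;\] consequently $\lim_{l\to\infty}\delta_l(x)=\delta_\alpha(x)$ for all $x\in D(\delta_\alpha^2)$, i.e. $D(\delta_\alpha^2)\subseteq\mathcal{D}:=\{x\in D(\delta_\alpha):\lim_n\delta_n(x)=\delta_\alpha(x)\}$, while $\delta_\alpha$ is unbounded.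
   Context: A flow is a strongly continuous one-parameter group of $*$-automorphisms with generator $\delta_\alpha(x)=\lim_{t\to0}(\alpha_t(x)-x)/t$ on its domain $D(\delta_\alpha)$; $D(\delta_\alpha^2)=\{x\in D(\delta_\alpha):\delta_\alpha(x)\in D(\delta_\alpha)\}$. *)

theory Defs
  imports "HOL-Analysis.Analysis"
begin

text \<open>Matrices are functions nat => nat => complex; a 2^n x 2^n matrix only uses indices < 2^n.
  Basis index a of (C^2)^{\<otimes> n}: bit (i-1) of a is the state (0 or 1) at site i.
  An element of A is represented by a norm-Cauchy sequence X with X n in A_{1..n};
  two representatives denote the same element iff the A-norm of their difference is 0.\<close>

type_synonym mat = "nat \<Rightarrow> nat \<Rightarrow> complex"

definition mmul :: "nat \<Rightarrow> mat \<Rightarrow> mat \<Rightarrow> mat" where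
  "mmul d x y = (\<lambda>a b. \<Sum>c<d. x a c * y c b)"

definition mdiff :: "mat \<Rightarrow> mat \<Rightarrow> mat" where
  "mdiff x y = (\<lambda>a b. x a b - y a b)"

definition opnorm :: "nat \<Rightarrow> mat \<Rightarrow> real" where
  "opnorm d x = Sup ((\<lambda>v. sqrt (\<Sum>a<d. (cmod (\<Sum>b<d. x a b * v b))\<^sup>2))
                     ` {v. (\<Sum>b<d. (cmod (v b))\<^sup>2) \<le> 1})"

text \<open>embedding A_{1..n} into A_{1..m} (m \<ge> n): x \<mapsto> x \<otimes> 1\<close>
definition emb :: "nat \<Rightarrow> mat \<Rightarrow> mat" where
  "emb n x = (\<lambda>a b. if a div 2^n = b div 2^n then x (a mod 2^n) (b mod 2^n) else 0)"

text \<open>the 2x2 matrix h placed at site i (tensored with identities elsewhere)\<close>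
definition site_op :: "nat \<Rightarrow> mat \<Rightarrow> mat" where
  "site_op i h = (\<lambda>a b. if (\<forall>j. j \<noteq> i - 1 \<longrightarrow> bit a j = bit b j)
                        then h (of_bool (bit a (i - 1))) (of_bool (bit b (i - 1))) else 0)"

definition hloc :: "(nat \<Rightarrow> real) \<Rightarrow> nat \<Rightarrow> mat" where
  "hloc lam i = site_op i (\<lambda>p q. if p = 0 \<and> q = 0 then complex_of_real (lam i) else 0)"

definition Hmat :: "(nat \<Rightarrow> real) \<Rightarrow> nat \<Rightarrow> mat" where
  "Hmat lam n = (\<lambda>a b. \<Sum>i\<in>{1..n}. hloc lam i a b)"

text \<open>e^{itH_n}; H_n is diagonal, so its exponential is the diagonal matrix of exponentials\<close>
definition expH :: "(nat \<Rightarrow> real) \<Rightarrow> nat \<Rightarrow> real \<Rightarrow> mat" where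
  "expH lam n t = (\<lambda>a b. if a = b then exp (\<i> * complex_of_real t * Hmat lam n a a) else 0)"

definition is_uhf :: "(nat \<Rightarrow> mat) \<Rightarrow> bool" where
  "is_uhf X \<longleftrightarrow> (\<forall>e>0. \<exists>N. \<forall>n m. N \<le> n \<and> n \<le> m \<longrightarrow>
       opnorm (2^m) (mdiff (X m) (emb n (X n))) < e)"

definition anorm :: "(nat \<Rightarrow> mat) \<Rightarrow> real" where
  "anorm X = lim (\<lambda>n. opnorm (2^n) (X n))"

definition adiff :: "(nat \<Rightarrow> mat) \<Rightarrow> (nat \<Rightarrow> mat) \<Rightarrow> (nat \<Rightarrow> mat)" where
  "adiff X Y = (\<lambda>n. mdiff (X n) (Y n))"

definition ascale :: "complex \<Rightarrow> (nat \<Rightarrow> mat) \<Rightarrow> (nat \<Rightarrow> mat)" where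
  "ascale c X = (\<lambda>n a b. c * X n a b)"

definition alpha :: "(nat \<Rightarrow> real) \<Rightarrow> real \<Rightarrow> (nat \<Rightarrow> mat) \<Rightarrow> (nat \<Rightarrow> mat)" where
  "alpha lam t X = (\<lambda>n. mmul (2^n) (mmul (2^n) (expH lam n t) (X n)) (expH lam n (- t)))"

definition delta :: "(nat \<Rightarrow> real) \<Rightarrow> nat \<Rightarrow> (nat \<Rightarrow> mat) \<Rightarrow> (nat \<Rightarrow> mat)" where
  "delta lam k X = (\<lambda>m. (\<lambda>a b. \<i> * (mmul (2^m) (Hmat lam k) (X m) a b
                                     - mmul (2^m) (X m) (Hmat lam k) a b)))"

text \<open>x \<in> D(delta_alpha) with delta_alpha(x) = y\<close>
definition is_gen :: "(nat \<Rightarrow> real) \<Rightarrow> (nat \<Rightarrow> mat) \<Rightarrow> (nat \<Rightarrow> mat) \<Rightarrow> bool" where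
  "is_gen lam X Y \<longleftrightarrow> is_uhf X \<and> is_uhf Y \<and>
     ((\<lambda>t. anorm (adiff (ascale (complex_of_real (1 / t)) (adiff (alpha lam t X) X)) Y))
        \<longlongrightarrow> 0) (at 0)"

end

theory Submission
  imports Defs
begin

definition ns :: "nat \<Rightarrow> (nat \<Rightarrow> complex) \<Rightarrow> real" where
  "ns d v = (\<Sum>b<d. (cmod (v b))\<^sup>2)"

definition mv :: "nat \<Rightarrow> mat \<Rightarrow> (nat \<Rightarrow> complex) \<Rightarrow> (nat \<Rightarrow> complex)" where
  "mv d x v = (\<lambda>a. \<Sum>b<d. x a b * v b)"

lemma ns_nonneg: "0 \<le> ns d v" unfolding ns_def by (simp add: sum_nonneg)

lemma opnorm_alt: "opnorm d x = Sup ((\<lambda>v. sqrt (ns d (mv d x v))) ` {v. ns d v \<le> 1})"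
  unfolding opnorm_def ns_def mv_def by simp

lemma cmod_mv_le: assumes "ns d v \<le> 1" shows "cmod (mv d x v a) \<le> (\<Sum>b<d. cmod (x a b))"
proof -
  have "cmod (mv d x v a) \<le> (\<Sum>b<d. cmod (x a b * v b))" unfolding mv_def by (rule norm_sum)
  also have "\<dots> \<le> (\<Sum>b<d. cmod (x a b))"
  proof (rule sum_mono)
    fix b assume b: "b \<in> {..<d}"
    have "(cmod (v b))\<^sup>2 \<le> ns d v" unfolding ns_def
      using b by (intro member_le_sum) auto
    hence "(cmod (v b))\<^sup>2 \<le> 1" using assms by linarith
    hence "cmod (v b) \<le> 1" by (simp add: power_le_one_iff)
    thus "cmod (x a b * v b) \<le> cmod (x a b)" by (simp add: norm_mult mult_left_le)
  qed
  finally show ?thesis .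
qed

lemma sqrt_ns_le: assumes "ns d v \<le> 1" shows "sqrt (ns d (mv d x v)) \<le> (\<Sum>a<d. \<Sum>b<d. cmod (x a b))"
proof -
  have "sqrt (ns d (mv d x v)) = L2_set (\<lambda>a. cmod (mv d x v a)) {..<d}"
    unfolding ns_def L2_set_def by simp
  also have "\<dots> \<le> (\<Sum>a<d. cmod (mv d x v a))" by (rule L2_set_le_sum) auto
  also have "\<dots> \<le> (\<Sum>a<d. \<Sum>b<d. cmod (x a b))" by (intro sum_mono cmod_mv_le assms)
  finally show ?thesis .
qed

lemma opnorm_bdd: "bdd_above ((\<lambda>v. sqrt (ns d (mv d x v))) ` {v. ns d v \<le> 1})"
  using sqrt_ns_le by (auto intro!: bdd_aboveI2)

lemma opnorm_upper: "ns d v \<le> 1 \<Longrightarrow> sqrt (ns d (mv d x v)) \<le> opnorm d x"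
  unfolding opnorm_alt by (rule cSup_upper) (use opnorm_bdd in auto)

lemma ns0: "ns d (\<lambda>_. 0) \<le> 1" by (simp add: ns_def)

lemma opnorm_nonneg: "0 \<le> opnorm d x"
  using opnorm_upper[OF ns0, of d x] by (meson order_trans real_sqrt_ge_zero ns_nonneg)

lemma opnorm_least: assumes "\<And>v. ns d v \<le> 1 \<Longrightarrow> ns d (mv d x v) \<le> C\<^sup>2" "0 \<le> C"
  shows "opnorm d x \<le> C"
  unfolding opnorm_alt
proof (rule cSup_least)
  show "(\<lambda>v. sqrt (ns d (mv d x v))) ` {v. ns d v \<le> 1} \<noteq> {}" using ns0 by blast
next
  fix y assume "y \<in> (\<lambda>v. sqrt (ns d (mv d x v))) ` {v. ns d v \<le> 1}"
  then obtain v where v: "ns d v \<le> 1" "y = sqrt (ns d (mv d x v))" by auto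
  have "sqrt (ns d (mv d x v)) \<le> sqrt (C\<^sup>2)" using assms(1)[OF v(1)] by (rule real_sqrt_le_mono)
  thus "y \<le> C" using v assms(2) by simp
qed

lemma ns_upper: "ns d v \<le> 1 \<Longrightarrow> ns d (mv d x v) \<le> (opnorm d x)\<^sup>2"
proof -
  assume "ns d v \<le> 1"
  from opnorm_upper[OF this, of x] have "sqrt (ns d (mv d x v)) \<le> opnorm d x" .
  hence "(sqrt (ns d (mv d x v)))\<^sup>2 \<le> (opnorm d x)\<^sup>2" by (intro power_mono) (auto simp: ns_nonneg)
  thus ?thesis using ns_nonneg[of d "mv d x v"] by simp
qed

lemma ns_scale: "ns d (\<lambda>b. c * v b) = (cmod c)\<^sup>2 * ns d v"
  unfolding ns_def by (simp add: norm_mult power_mult_distrib sum_distrib_left)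

lemma mv_scale: "mv d x (\<lambda>b. c * v b) = (\<lambda>a. c * mv d x v a)"
  unfolding mv_def by (auto simp: sum_distrib_left ac_simps)

lemma ns_zero_iff: "ns d v = 0 \<longleftrightarrow> (\<forall>b<d. v b = 0)"
  unfolding ns_def by (subst sum_nonneg_eq_0_iff) auto

lemma ns_upper_gen: "ns d (mv d x v) \<le> (opnorm d x)\<^sup>2 * ns d v"
proof (cases "ns d v = 0")
  case True
  hence "\<forall>b<d. v b = 0" by (simp add: ns_zero_iff)
  hence "mv d x v = (\<lambda>a. 0)" unfolding mv_def by (auto intro!: sum.neutral)
  thus ?thesis using True by (simp add: ns_def)
next
  case False
  hence pos: "ns d v > 0" using ns_nonneg[of d v] by linarith
  define c where "c = complex_of_real (1 / sqrt (ns d v))"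
  have "cmod c = 1 / sqrt (ns d v)" using pos unfolding c_def by (simp add: norm_divide)
  hence cm: "(cmod c)\<^sup>2 = 1 / ns d v" using pos by (simp add: power_divide)
  have "ns d (\<lambda>b. c * v b) \<le> 1" using pos by (simp add: ns_scale cm)
  from ns_upper[OF this, of x] have "(cmod c)\<^sup>2 * ns d (mv d x v) \<le> (opnorm d x)\<^sup>2"
    by (simp add: mv_scale ns_scale)
  thus ?thesis using pos by (simp add: cm field_simps)
qed

lemma opnorm_cong: assumes "\<And>a b. a < d \<Longrightarrow> b < d \<Longrightarrow> x a b = y a b"
  shows "opnorm d x = opnorm d y"
proof -
  have "\<And>v. ns d (mv d x v) = ns d (mv d y v)" unfolding ns_def mv_def
    using assms by (intro sum.cong) auto
  thus ?thesis unfolding opnorm_alt by simp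
qed


lemma sqrt_ns_L2: "sqrt (ns d v) = L2_set (\<lambda>b. cmod (v b)) {..<d}"
  unfolding ns_def L2_set_def by simp

lemma opnorm_least': assumes "\<And>v. ns d v \<le> 1 \<Longrightarrow> sqrt (ns d (mv d x v)) \<le> C"
  shows "opnorm d x \<le> C"
  unfolding opnorm_alt
proof (rule cSup_least)
  show "(\<lambda>v. sqrt (ns d (mv d x v))) ` {v. ns d v \<le> 1} \<noteq> {}" using ns0 by blast
next
  fix y assume "y \<in> (\<lambda>v. sqrt (ns d (mv d x v))) ` {v. ns d v \<le> 1}"
  then show "y \<le> C" using assms by auto
qed

lemma opnorm_triangle: "opnorm d (\<lambda>a b. x a b + y a b) \<le> opnorm d x + opnorm d y"
proof (rule opnorm_least')
  fix v assume v: "ns d v \<le> 1"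
  have "mv d (\<lambda>a b. x a b + y a b) v = (\<lambda>a. mv d x v a + mv d y v a)"
    unfolding mv_def by (auto simp: distrib_right sum.distrib)
  hence "sqrt (ns d (mv d (\<lambda>a b. x a b + y a b) v)) = L2_set (\<lambda>a. cmod (mv d x v a + mv d y v a)) {..<d}"
    by (simp add: sqrt_ns_L2)
  also have "\<dots> \<le> L2_set (\<lambda>a. cmod (mv d x v a) + cmod (mv d y v a)) {..<d}"
    by (rule L2_set_mono) (auto simp: norm_triangle_ineq)
  also have "\<dots> \<le> L2_set (\<lambda>a. cmod (mv d x v a)) {..<d} + L2_set (\<lambda>a. cmod (mv d y v a)) {..<d}"
    by (rule L2_set_triangle_ineq)
  also have "\<dots> \<le> opnorm d x + opnorm d y"
    using opnorm_upper[OF v, of x] opnorm_upper[OF v, of y] by (simp add: sqrt_ns_L2)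
  finally show "sqrt (ns d (mv d (\<lambda>a b. x a b + y a b) v)) \<le> opnorm d x + opnorm d y" .
qed

lemma opnorm_scale_le: "opnorm d (\<lambda>a b. c * x a b) \<le> cmod c * opnorm d x"
proof (rule opnorm_least')
  fix v assume v: "ns d v \<le> 1"
  have "mv d (\<lambda>a b. c * x a b) v = (\<lambda>a. c * mv d x v a)"
    unfolding mv_def by (auto simp: sum_distrib_left ac_simps)
  hence "ns d (mv d (\<lambda>a b. c * x a b) v) = (cmod c)\<^sup>2 * ns d (mv d x v)"
    by (simp add: ns_scale)
  hence "sqrt (ns d (mv d (\<lambda>a b. c * x a b) v)) = cmod c * sqrt (ns d (mv d x v))"
    by (simp add: real_sqrt_mult)
  also have "\<dots> \<le> cmod c * opnorm d x"
    using opnorm_upper[OF v, of x] by (simp add: mult_left_mono)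
  finally show "sqrt (ns d (mv d (\<lambda>a b. c * x a b) v)) \<le> cmod c * opnorm d x" .
qed

lemma opnorm_scale: "opnorm d (\<lambda>a b. c * x a b) = cmod c * opnorm d x"
proof (cases "c = 0")
  case True
  have "opnorm d (\<lambda>a b. c * x a b) \<le> 0" using opnorm_scale_le[of d c x] True by simp
  thus ?thesis using True opnorm_nonneg[of d "\<lambda>a b. c * x a b"] by simp
next
  case False
  have "opnorm d x = opnorm d (\<lambda>a b. (1/c) * (c * x a b))" using False by simp
  also have "\<dots> \<le> cmod (1/c) * opnorm d (\<lambda>a b. c * x a b)" by (rule opnorm_scale_le)
  finally have "cmod c * opnorm d x \<le> opnorm d (\<lambda>a b. c * x a b)"
    using False by (simp add: norm_divide field_simps)
  thus ?thesis using opnorm_scale_le[of d c x] by linarith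
qed

lemma opnorm_minus: "opnorm d (\<lambda>a b. - x a b) = opnorm d x"
  using opnorm_scale[of d "-1" x] by simp

lemma mdiff_alt: "mdiff x y = (\<lambda>a b. x a b + (- y a b))" unfolding mdiff_def by auto

lemma opnorm_mdiff: "opnorm d (mdiff x y) \<le> opnorm d x + opnorm d y"
  unfolding mdiff_alt using opnorm_triangle[of d x "\<lambda>a b. - y a b"] opnorm_minus[of d y] by simp

lemma opnorm_mdiff_sym: "opnorm d (mdiff x y) = opnorm d (mdiff y x)"
  using opnorm_minus[of d "mdiff x y"] unfolding mdiff_def by simp

lemma opnorm_mdiff_tri: "opnorm d (mdiff x z) \<le> opnorm d (mdiff x y) + opnorm d (mdiff y z)"
proof -
  have "mdiff x z = (\<lambda>a b. mdiff x y a b + mdiff y z a b)" unfolding mdiff_def by auto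
  thus ?thesis using opnorm_triangle[of d "mdiff x y" "mdiff y z"] by simp
qed

lemma opnorm_sum: "finite S \<Longrightarrow> opnorm d (\<lambda>a b. \<Sum>e\<in>S. f e a b) \<le> (\<Sum>e\<in>S. opnorm d (f e))"
proof (induction S rule: finite_induct)
  case empty
  have "opnorm d (\<lambda>a b. 0) \<le> 0" using opnorm_scale[of d 0 "\<lambda>a b. 0"] by simp
  thus ?case by simp
next
  case (insert e S)
  have "opnorm d (\<lambda>a b. \<Sum>e\<in>insert e S. f e a b) = opnorm d (\<lambda>a b. f e a b + (\<Sum>e\<in>S. f e a b))"
    using insert by simp
  also have "\<dots> \<le> opnorm d (f e) + opnorm d (\<lambda>a b. \<Sum>e\<in>S. f e a b)" by (rule opnorm_triangle)
  finally show ?case using insert by simp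
qed

lemma opnorm_rank1:
  assumes u: "\<And>a. a < d \<Longrightarrow> cmod (u a) \<le> U" and w: "\<And>b. b < d \<Longrightarrow> cmod (w b) \<le> W"
    and U: "0 \<le> U" and W: "0 \<le> W"
  shows "opnorm d (\<lambda>a b. u a * w b * x a b) \<le> U * W * opnorm d x"
proof (rule opnorm_least)
  fix v assume v: "ns d v \<le> 1"
  have eq: "mv d (\<lambda>a b. u a * w b * x a b) v = (\<lambda>a. u a * mv d x (\<lambda>b. w b * v b) a)"
    unfolding mv_def by (auto simp: sum_distrib_left ac_simps)
  have nw: "ns d (\<lambda>b. w b * v b) \<le> W\<^sup>2 * ns d v"
    unfolding ns_def sum_distrib_left
  proof (rule sum_mono)
    fix b assume "b \<in> {..<d}"
    hence "cmod (w b) \<le> W" using w by auto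
    hence "(cmod (w b))\<^sup>2 \<le> W\<^sup>2" by (intro power_mono) auto
    thus "(cmod (w b * v b))\<^sup>2 \<le> W\<^sup>2 * (cmod (v b))\<^sup>2"
      by (simp add: norm_mult power_mult_distrib mult_right_mono)
  qed
  have "ns d (mv d (\<lambda>a b. u a * w b * x a b) v) \<le> U\<^sup>2 * ns d (mv d x (\<lambda>b. w b * v b))"
    unfolding eq ns_def sum_distrib_left
  proof (rule sum_mono)
    fix a assume "a \<in> {..<d}"
    hence "cmod (u a) \<le> U" using u by auto
    hence "(cmod (u a))\<^sup>2 \<le> U\<^sup>2" by (intro power_mono) auto
    thus "(cmod (u a * mv d x (\<lambda>b. w b * v b) a))\<^sup>2 \<le> U\<^sup>2 * (cmod (mv d x (\<lambda>b. w b * v b) a))\<^sup>2"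
      by (simp add: norm_mult power_mult_distrib mult_right_mono)
  qed
  also have "\<dots> \<le> U\<^sup>2 * ((opnorm d x)\<^sup>2 * ns d (\<lambda>b. w b * v b))"
    by (intro mult_left_mono ns_upper_gen) auto
  also have "\<dots> \<le> U\<^sup>2 * ((opnorm d x)\<^sup>2 * (W\<^sup>2 * ns d v))"
    by (intro mult_left_mono nw) auto
  also have "\<dots> \<le> U\<^sup>2 * ((opnorm d x)\<^sup>2 * (W\<^sup>2 * 1))"
    by (intro mult_left_mono v) auto
  also have "\<dots> = (U * W * opnorm d x)\<^sup>2" by (simp add: power_mult_distrib)
  finally show "ns d (mv d (\<lambda>a b. u a * w b * x a b) v) \<le> (U * W * opnorm d x)\<^sup>2" .
next
  show "0 \<le> U * W * opnorm d x" using U W opnorm_nonneg by simp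
qed


lemma sum_shift_block: fixes N :: nat shows "sum f {k..<k+N} = (\<Sum>r<N. f (k + r))"
  by (induction N) (simp_all add: add.commute)

lemma sum_split_blocks: fixes f :: "nat \<Rightarrow> 'a::comm_monoid_add" shows "(\<Sum>a<Q*N. f a) = (\<Sum>q<Q. \<Sum>r<N. f (q*N + r))"
  using sum.nat_group[of f N Q] by (simp add: sum_shift_block)

lemma divmod_block: "r < (N::nat) \<Longrightarrow> (q*N + r) div N = q \<and> (q*N + r) mod N = r"
  by auto

lemma emb_norm_ge: "opnorm (2^n) x \<le> opnorm (2^m) (emb n x)" if "n \<le> m"
proof (rule opnorm_least')
  fix v assume v: "ns (2^n) v \<le> 1"
  define v' where "v' b = (if b < 2^n then v b else 0)" for b
  have sub: "{..<(2::nat)^n} \<subseteq> {..<2^m}" using that by (auto intro: order_less_le_trans)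
  have "ns (2^m) v' = ns (2^n) v"
    unfolding ns_def v'_def using sub
    by (intro sum.mono_neutral_cong_right) auto
  hence v': "ns (2^m) v' \<le> 1" using v by simp
  have mvq: "mv (2^m) (emb n x) v' a = mv (2^n) x v a" if "a < 2^n" for a
    unfolding mv_def v'_def using sub that
    by (intro sum.mono_neutral_cong_right) (auto simp: emb_def)
  have "ns (2^n) (mv (2^n) x v) = (\<Sum>a<2^n. (cmod (mv (2^m) (emb n x) v' a))\<^sup>2)"
    unfolding ns_def using mvq by simp
  also have "\<dots> \<le> ns (2^m) (mv (2^m) (emb n x) v')"
    unfolding ns_def using sub by (intro sum_mono2) auto
  finally have "sqrt (ns (2^n) (mv (2^n) x v)) \<le> sqrt (ns (2^m) (mv (2^m) (emb n x) v'))" by simp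
  also have "\<dots> \<le> opnorm (2^m) (emb n x)" by (rule opnorm_upper[OF v'])
  finally show "sqrt (ns (2^n) (mv (2^n) x v)) \<le> opnorm (2^m) (emb n x)" .
qed

lemma emb_norm_le: "opnorm (2^m) (emb n x) \<le> opnorm (2^n) x" if "n \<le> m"
proof -
  define N where "N = (2::nat)^n"
  define Q where "Q = (2::nat)^(m-n)"
  have QN: "(2::nat)^m = Q * N" unfolding Q_def N_def using that by (simp flip: power_add)
  have Npos: "N > 0" unfolding N_def by simp
  have "opnorm (Q*N) (emb n x) \<le> opnorm N x"
  proof (rule opnorm_least)
    fix v assume v: "ns (Q*N) v \<le> 1"
    define vq where "vq q s = v (q*N + s)" for q s
    have mvb: "mv (Q*N) (emb n x) v (q*N + r) = mv N x (vq q) r" if "q < Q" "r < N" for q r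
    proof -
      have "mv (Q*N) (emb n x) v (q*N + r) = (\<Sum>q'<Q. \<Sum>s<N. emb n x (q*N + r) (q'*N + s) * v (q'*N+s))"
        unfolding mv_def by (rule sum_split_blocks)
      also have "\<dots> = (\<Sum>q'<Q. if q' = q then (\<Sum>s<N. x r s * vq q s) else 0)"
        using that by (intro sum.cong refl) (auto simp: emb_def N_def[symmetric] vq_def intro!: sum.cong)
      also have "\<dots> = (\<Sum>s<N. x r s * vq q s)" using that by simp
      finally show ?thesis unfolding mv_def .
    qed
    have "ns (Q*N) (mv (Q*N) (emb n x) v) = (\<Sum>q<Q. ns N (mv N x (vq q)))"
      unfolding ns_def by (subst sum_split_blocks) (auto simp: mvb intro!: sum.cong)
    also have "\<dots> \<le> (\<Sum>q<Q. (opnorm N x)\<^sup>2 * ns N (vq q))"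
      by (intro sum_mono ns_upper_gen)
    also have "\<dots> = (opnorm N x)\<^sup>2 * ns (Q*N) v"
      unfolding ns_def vq_def by (simp add: sum_distrib_left sum_split_blocks)
    also have "\<dots> \<le> (opnorm N x)\<^sup>2 * 1" by (intro mult_left_mono v) auto
    finally show "ns (Q*N) (mv (Q*N) (emb n x) v) \<le> (opnorm N x)\<^sup>2" by simp
  qed (rule opnorm_nonneg)
  thus ?thesis using QN N_def by simp
qed

lemma emb_norm: "n \<le> m \<Longrightarrow> opnorm (2^m) (emb n x) = opnorm (2^n) x"
  using emb_norm_le emb_norm_ge by (meson order_antisym)


definition lagree :: "(nat \<Rightarrow> mat) \<Rightarrow> (nat \<Rightarrow> mat) \<Rightarrow> bool" where
  "lagree X Y \<longleftrightarrow> (\<forall>m a b. a < 2^m \<longrightarrow> b < 2^m \<longrightarrow> X m a b = Y m a b)"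

lemma mod_pow_less: "n \<le> m \<Longrightarrow> (a::nat) mod 2^n < 2^m"
  by (meson mod_less_divisor order_less_le_trans pos2 power_increasing zero_less_power one_le_numeral)

lemma uhf_cong: assumes "lagree X Y" shows "is_uhf X = is_uhf Y"
proof -
  have "opnorm (2^m) (mdiff (X m) (emb n (X n))) = opnorm (2^m) (mdiff (Y m) (emb n (Y n)))" for n m
    using assms unfolding lagree_def
    by (intro opnorm_cong) (auto simp: mdiff_def emb_def)
  thus ?thesis unfolding is_uhf_def by simp
qed

lemma anorm_cong: assumes "lagree X Y" shows "anorm X = anorm Y"
proof -
  have "opnorm (2^m) (X m) = opnorm (2^m) (Y m)" for m
    using assms unfolding lagree_def by (intro opnorm_cong) auto
  thus ?thesis unfolding anorm_def by simp
qed

lemma uhf_conv: assumes "is_uhf X" shows "(\<lambda>m. opnorm (2^m) (X m)) \<longlonglongrightarrow> anorm X"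
proof -
  have "Cauchy (\<lambda>m. opnorm (2^m) (X m))"
  proof (rule metric_CauchyI)
    fix e :: real assume e: "e > 0"
    then obtain N where N: "\<And>n m. N \<le> n \<Longrightarrow> n \<le> m \<Longrightarrow> opnorm (2^m) (mdiff (X m) (emb n (X n))) < e"
      using assms unfolding is_uhf_def by blast
    have *: "\<bar>opnorm (2^m) (X m) - opnorm (2^n) (X n)\<bar> < e" if "N \<le> n" "n \<le> m" for n m
    proof -
      have en: "opnorm (2^m) (emb n (X n)) = opnorm (2^n) (X n)" using that by (simp add: emb_norm)
      have "X m = (\<lambda>a b. mdiff (X m) (emb n (X n)) a b + emb n (X n) a b)" by (auto simp: mdiff_def)
      hence a: "opnorm (2^m) (X m) \<le> opnorm (2^m) (mdiff (X m) (emb n (X n))) + opnorm (2^m) (emb n (X n))"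
        using opnorm_triangle[of "2^m" "mdiff (X m) (emb n (X n))" "emb n (X n)"] by simp
      have "emb n (X n) = (\<lambda>a b. mdiff (emb n (X n)) (X m) a b + X m a b)" by (auto simp: mdiff_def)
      hence b: "opnorm (2^m) (emb n (X n)) \<le> opnorm (2^m) (mdiff (emb n (X n)) (X m)) + opnorm (2^m) (X m)"
        using opnorm_triangle[of "2^m" "mdiff (emb n (X n)) (X m)" "X m"] by simp
      show ?thesis using a b N[OF that] en opnorm_mdiff_sym[of "2^m" "X m" "emb n (X n)"] by linarith
    qed
    show "\<exists>M. \<forall>m\<ge>M. \<forall>n\<ge>M. dist (opnorm (2^m) (X m)) (opnorm (2^n) (X n)) < e"
    proof (intro exI allI impI)
      fix m n assume "N \<le> m" "N \<le> n"
      thus "dist (opnorm (2^m) (X m)) (opnorm (2^n) (X n)) < e"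
        using *[of n m] *[of m n] unfolding dist_real_def by (cases "n \<le> m") auto
    qed
  qed
  hence "convergent (\<lambda>m. opnorm (2^m) (X m))" by (simp add: Cauchy_convergent_iff)
  thus ?thesis unfolding anorm_def by (simp add: convergent_LIMSEQ_iff)
qed

lemma anorm_nonneg: "is_uhf X \<Longrightarrow> 0 \<le> anorm X"
  using uhf_conv[of X] by (rule LIMSEQ_le_const) (auto simp: opnorm_nonneg)

lemma anorm_le_ev: assumes "is_uhf X" "is_uhf Y" "\<And>m. M \<le> m \<Longrightarrow> opnorm (2^m) (X m) \<le> C * opnorm (2^m) (Y m) + D"
  shows "anorm X \<le> C * anorm Y + D"
proof (rule LIMSEQ_le[OF uhf_conv[OF assms(1)]])
  show "(\<lambda>m. C * opnorm (2^m) (Y m) + D) \<longlonglongrightarrow> C * anorm Y + D"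
    by (intro tendsto_intros uhf_conv assms)
  show "\<exists>N. \<forall>n\<ge>N. opnorm (2^n) (X n) \<le> C * opnorm (2^n) (Y n) + D" using assms(3) by blast
qed

lemma emb_mdiff: "emb n (mdiff x y) = mdiff (emb n x) (emb n y)"
  unfolding emb_def mdiff_def by (intro ext) auto

lemma emb_scale: "emb n (\<lambda>a b. c * x a b) = (\<lambda>a b. c * emb n x a b)"
  unfolding emb_def by (intro ext) auto

lemma uhf_adiff: assumes "is_uhf X" "is_uhf Y" shows "is_uhf (adiff X Y)"
  unfolding is_uhf_def
proof (intro allI impI)
  fix e :: real assume e: "e > 0"
  obtain N1 where N1: "\<And>n m. N1 \<le> n \<Longrightarrow> n \<le> m \<Longrightarrow> opnorm (2^m) (mdiff (X m) (emb n (X n))) < e/2"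
    using assms(1) e unfolding is_uhf_def by (meson half_gt_zero)
  obtain N2 where N2: "\<And>n m. N2 \<le> n \<Longrightarrow> n \<le> m \<Longrightarrow> opnorm (2^m) (mdiff (Y m) (emb n (Y n))) < e/2"
    using assms(2) e unfolding is_uhf_def by (meson half_gt_zero)
  show "\<exists>N. \<forall>n m. N \<le> n \<and> n \<le> m \<longrightarrow> opnorm (2^m) (mdiff (adiff X Y m) (emb n (adiff X Y n))) < e"
  proof (intro exI allI impI)
    fix n m assume nm: "max N1 N2 \<le> n \<and> n \<le> m"
    have "mdiff (adiff X Y m) (emb n (adiff X Y n)) = mdiff (mdiff (X m) (emb n (X n))) (mdiff (Y m) (emb n (Y n)))"
      unfolding adiff_def emb_mdiff by (intro ext) (simp add: mdiff_def algebra_simps)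
    hence "opnorm (2^m) (mdiff (adiff X Y m) (emb n (adiff X Y n))) \<le> opnorm (2^m) (mdiff (X m) (emb n (X n))) + opnorm (2^m) (mdiff (Y m) (emb n (Y n)))"
      by (simp add: opnorm_mdiff)
    thus "opnorm (2^m) (mdiff (adiff X Y m) (emb n (adiff X Y n))) < e"
      using N1[of n m] N2[of n m] nm by auto
  qed
qed

lemma uhf_ascale: assumes "is_uhf X" shows "is_uhf (ascale c X)"
  unfolding is_uhf_def
proof (intro allI impI)
  fix e :: real assume e: "e > 0"
  have "cmod c + 1 > 0" by (simp add: add_nonneg_pos)
  hence e': "e / (cmod c + 1) > 0" using e by (intro divide_pos_pos)
  obtain N where N: "\<And>n m. N \<le> n \<Longrightarrow> n \<le> m \<Longrightarrow> opnorm (2^m) (mdiff (X m) (emb n (X n))) < e / (cmod c + 1)"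
    using assms e' unfolding is_uhf_def by meson
  show "\<exists>N. \<forall>n m. N \<le> n \<and> n \<le> m \<longrightarrow> opnorm (2^m) (mdiff (ascale c X m) (emb n (ascale c X n))) < e"
  proof (intro exI allI impI)
    fix n m assume nm: "N \<le> n \<and> n \<le> m"
    have "mdiff (ascale c X m) (emb n (ascale c X n)) = (\<lambda>a b. c * mdiff (X m) (emb n (X n)) a b)"
      unfolding ascale_def emb_def mdiff_def by (intro ext) (auto simp: algebra_simps)
    hence "opnorm (2^m) (mdiff (ascale c X m) (emb n (ascale c X n))) = cmod c * opnorm (2^m) (mdiff (X m) (emb n (X n)))"
      by (simp add: opnorm_scale)
    also have "\<dots> \<le> cmod c * (e / (cmod c + 1))" using N[of n m] nm by (intro mult_left_mono) auto
    also have "\<dots> < e" using e \<open>cmod c + 1 > 0\<close> by (simp add: field_simps)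
    finally show "opnorm (2^m) (mdiff (ascale c X m) (emb n (ascale c X n))) < e" .
  qed
qed

lemma anorm_ascale: assumes "is_uhf X" shows "anorm (ascale c X) = cmod c * anorm X"
proof -
  have "(\<lambda>m. opnorm (2^m) (ascale c X m)) = (\<lambda>m. cmod c * opnorm (2^m) (X m))"
    unfolding ascale_def by (simp add: opnorm_scale)
  moreover have "(\<lambda>m. cmod c * opnorm (2^m) (X m)) \<longlonglongrightarrow> cmod c * anorm X"
    by (intro tendsto_intros uhf_conv assms)
  ultimately show ?thesis using uhf_conv[OF uhf_ascale[OF assms, of c]] LIMSEQ_unique by metis
qed

lemma anorm_tri: assumes "is_uhf X" "is_uhf Y" "is_uhf Z"
  shows "anorm (adiff X Z) \<le> anorm (adiff X Y) + anorm (adiff Y Z)"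
proof -
  have "anorm (adiff X Z) \<le> 1 * anorm (adiff X Y) + (anorm (adiff Y Z))"
  proof (rule LIMSEQ_le[OF uhf_conv[OF uhf_adiff[OF assms(1,3)]]])
    show "(\<lambda>m. 1 * opnorm (2^m) (adiff X Y m) + opnorm (2^m) (adiff Y Z m)) \<longlonglongrightarrow> 1 * anorm (adiff X Y) + anorm (adiff Y Z)"
      by (intro tendsto_intros uhf_conv uhf_adiff assms)
    show "\<exists>N. \<forall>n\<ge>N. opnorm (2^n) (adiff X Z n) \<le> 1 * opnorm (2^n) (adiff X Y n) + opnorm (2^n) (adiff Y Z n)"
      unfolding adiff_def by (auto intro: opnorm_mdiff_tri)
  qed
  thus ?thesis by simp
qed

lemma anorm_adiff_sym: "anorm (adiff X Y) = anorm (adiff Y X)"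
  unfolding anorm_def adiff_def by (subst opnorm_mdiff_sym) simp

lemma anorm_adiff_le: assumes "is_uhf X" "is_uhf Y"
  shows "anorm (adiff X Y) \<le> anorm X + anorm Y"
proof -
  have "anorm (adiff X Y) \<le> 1 * anorm X + anorm Y"
  proof (rule LIMSEQ_le[OF uhf_conv[OF uhf_adiff[OF assms]]])
    show "(\<lambda>m. 1 * opnorm (2^m) (X m) + opnorm (2^m) (Y m)) \<longlonglongrightarrow> 1 * anorm X + anorm Y"
      by (intro tendsto_intros uhf_conv assms)
    show "\<exists>N. \<forall>n\<ge>N. opnorm (2^n) (adiff X Y n) \<le> 1 * opnorm (2^n) (X n) + opnorm (2^n) (Y n)"
      unfolding adiff_def by (auto intro: opnorm_mdiff)
  qed
  thus ?thesis by simp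
qed

lemma anorm_le_adiff: assumes "is_uhf X" "is_uhf Y"
  shows "anorm X \<le> anorm (adiff X Y) + anorm Y"
proof -
  have "anorm X \<le> 1 * anorm (adiff X Y) + anorm Y"
  proof (rule LIMSEQ_le[OF uhf_conv[OF assms(1)]])
    show "(\<lambda>m. 1 * opnorm (2^m) (adiff X Y m) + opnorm (2^m) (Y m)) \<longlonglongrightarrow> 1 * anorm (adiff X Y) + anorm Y"
      by (intro tendsto_intros uhf_conv uhf_adiff assms)
    show "\<exists>N. \<forall>n\<ge>N. opnorm (2^n) (X n) \<le> 1 * opnorm (2^n) (adiff X Y n) + opnorm (2^n) (Y n)"
    proof (intro exI allI impI)
      fix n
      have "X n = (\<lambda>a b. adiff X Y n a b + Y n a b)" unfolding adiff_def mdiff_def by auto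
      thus "opnorm (2^n) (X n) \<le> 1 * opnorm (2^n) (adiff X Y n) + opnorm (2^n) (Y n)"
        using opnorm_triangle[of "2^n" "adiff X Y n" "Y n"] by simp
    qed
  qed
  thus ?thesis by simp
qed

definition schur :: "mat \<Rightarrow> mat \<Rightarrow> mat" where
  "schur s w = (\<lambda>a b. s a b * w a b)"

definition compat :: "(nat \<Rightarrow> mat) \<Rightarrow> bool" where
  "compat s \<longleftrightarrow> (\<forall>m n a b. n \<le> m \<longrightarrow> a div 2^n = b div 2^n \<longrightarrow> s m a b = s n (a mod 2^n) (b mod 2^n))"

lemma uhf_schur: assumes c: "compat s" and C: "0 \<le> C"
  and bnd: "\<And>m w. opnorm (2^m) (schur (s m) w) \<le> C * opnorm (2^m) w" and X: "is_uhf X"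
  shows "is_uhf (\<lambda>m. schur (s m) (X m))" "anorm (\<lambda>m. schur (s m) (X m)) \<le> C * anorm X"
proof -
  show U: "is_uhf (\<lambda>m. schur (s m) (X m))"
    unfolding is_uhf_def
  proof (intro allI impI)
    fix e :: real assume e: "e > 0"
    have e': "e / (C + 1) > 0" using e C by simp
    obtain N where N: "\<And>n m. N \<le> n \<Longrightarrow> n \<le> m \<Longrightarrow> opnorm (2^m) (mdiff (X m) (emb n (X n))) < e / (C + 1)"
      using X e' unfolding is_uhf_def by meson
    show "\<exists>N. \<forall>n m. N \<le> n \<and> n \<le> m \<longrightarrow> opnorm (2^m) (mdiff (schur (s m) (X m)) (emb n (schur (s n) (X n)))) < e"
    proof (intro exI allI impI)
      fix n m assume nm: "N \<le> n \<and> n \<le> m"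
      have "mdiff (schur (s m) (X m)) (emb n (schur (s n) (X n))) = schur (s m) (mdiff (X m) (emb n (X n)))"
        using c nm unfolding compat_def schur_def mdiff_def emb_def by (intro ext) (auto simp: algebra_simps)
      hence "opnorm (2^m) (mdiff (schur (s m) (X m)) (emb n (schur (s n) (X n)))) \<le> C * opnorm (2^m) (mdiff (X m) (emb n (X n)))"
        using bnd by simp
      also have "\<dots> \<le> C * (e / (C + 1))" using N[of n m] nm C by (intro mult_left_mono) auto
      also have "\<dots> < e" using e C by (simp add: field_simps)
      finally show "opnorm (2^m) (mdiff (schur (s m) (X m)) (emb n (schur (s n) (X n)))) < e" .
    qed
  qed
  show "anorm (\<lambda>m. schur (s m) (X m)) \<le> C * anorm X"
    using anorm_le_ev[OF U X, of 0 C 0] bnd by simp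
qed


definition ch :: "nat \<Rightarrow> nat \<Rightarrow> nat \<Rightarrow> int" where
  "ch a b i = of_bool (bit b (i - 1)) - of_bool (bit a (i - 1))"

definition En :: "(nat \<Rightarrow> real) \<Rightarrow> nat \<Rightarrow> nat \<Rightarrow> real" where
  "En lam k a = (\<Sum>i\<in>{1..k}. if bit a (i - 1) then 0 else lam i)"

lemma bit_mod_pow: "bit ((a::nat) mod 2^n) j \<longleftrightarrow> j < n \<and> bit a j"
  by (simp flip: take_bit_eq_mod add: bit_take_bit_iff)

lemma bit_div_pow: "bit ((a::nat) div 2^n) k \<longleftrightarrow> bit a (n + k)"
  by (simp flip: drop_bit_eq_div add: bit_drop_bit_eq)

lemma bit_high_eq: assumes "(a::nat) div 2^n = b div 2^n" "n \<le> j" shows "bit a j = bit b j"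
proof -
  have "bit a j = bit (a div 2^n) (j - n)" using assms(2) by (simp add: bit_div_pow)
  also have "\<dots> = bit (b div 2^n) (j - n)" using assms(1) by simp
  also have "\<dots> = bit b j" using assms(2) by (simp add: bit_div_pow)
  finally show ?thesis .
qed

lemma bit_small: assumes "(a::nat) < 2^m" "m \<le> j" shows "\<not> bit a j"
proof -
  have "\<not> bit (a mod 2^m) j" using assms(2) by (simp add: bit_mod_pow)
  thus ?thesis using assms(1) by simp
qed

lemma ch_mod: assumes "a div 2^n = b div 2^n" shows "ch a b i = ch (a mod 2^n) (b mod 2^n) i"
  using bit_high_eq[OF assms, of "i - 1"] unfolding ch_def by (auto simp: bit_mod_pow)

lemma ch_mod_fun: assumes "a div 2^n = b div 2^n" shows "ch a b = ch (a mod 2^n) (b mod 2^n)"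
  using ch_mod[OF assms] by auto

lemma ch_high: assumes "a div 2^n = b div 2^n" "n < i" shows "ch a b i = 0"
  using bit_high_eq[OF assms(1), of "i - 1"] assms(2) unfolding ch_def by auto

lemma ch_small: assumes "a < 2^m" "b < 2^m" "m < i" shows "ch a b i = 0"
  using bit_small[OF assms(1), of "i - 1"] bit_small[OF assms(2), of "i - 1"] assms(3) unfolding ch_def by auto

lemma ch_range: "ch a b i \<in> {-1, 0, 1}"
  unfolding ch_def by auto

lemma ch_all0: assumes "\<forall>i\<ge>1. ch a b i = 0" shows "a = b"
proof -
  have "bit a j = bit b j" for j
  proof -
    from assms have "ch a b (Suc j) = 0" by auto
    thus ?thesis unfolding ch_def by auto
  qed
  thus ?thesis by (simp add: bit_eq_iff)
qed

lemma hloc_eq: "hloc lam i a b = (if a = b \<and> \<not> bit a (i - 1) then complex_of_real (lam i) else 0)"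
proof (cases "a = b")
  case True thus ?thesis unfolding hloc_def site_op_def by auto
next
  case False
  show ?thesis
  proof (cases "\<forall>j. j \<noteq> i - 1 \<longrightarrow> bit a j = bit b j")
    case True
    have "bit a (i - 1) \<noteq> bit b (i - 1)"
    proof
      assume "bit a (i - 1) = bit b (i - 1)"
      hence "\<forall>j. bit a j = bit b j" using True by metis
      thus False using False bit_eq_iff by blast
    qed
    thus ?thesis using False True unfolding hloc_def site_op_def by auto
  next
    case False2: False
    thus ?thesis using False unfolding hloc_def site_op_def by auto
  qed
qed

lemma Hmat_eq: "Hmat lam k a b = (if a = b then complex_of_real (En lam k a) else 0)"
  unfolding Hmat_def En_def by (auto simp: hloc_eq intro!: sum.cong)

lemma En_diff: "En lam k a - En lam k b = (\<Sum>i\<in>{1..k}. lam i * of_int (ch a b i))"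
  unfolding En_def ch_def sum_subtractf[symmetric] by (intro sum.cong) auto

lemma mmul_diag_left: assumes "\<And>a b. a \<noteq> b \<Longrightarrow> D a b = 0" "a < d"
  shows "mmul d D w a b = D a a * w a b"
proof -
  have "mmul d D w a b = (\<Sum>c\<in>{a}. D a c * w c b)"
    unfolding mmul_def using assms by (intro sum.mono_neutral_cong_right) auto
  thus ?thesis by simp
qed

lemma mmul_diag_right: assumes "\<And>a b. a \<noteq> b \<Longrightarrow> D a b = 0" "b < d"
  shows "mmul d w D a b = w a b * D b b"
proof -
  have "mmul d w D a b = (\<Sum>c\<in>{b}. w a c * D c b)"
    unfolding mmul_def using assms by (intro sum.mono_neutral_cong_right) auto
  thus ?thesis by simp
qed

definition asym :: "(nat \<Rightarrow> real) \<Rightarrow> real \<Rightarrow> nat \<Rightarrow> mat" where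
  "asym lam t m a b = exp (\<i> * complex_of_real (t * (En lam m a - En lam m b)))"

definition dsym :: "(nat \<Rightarrow> real) \<Rightarrow> nat \<Rightarrow> mat" where
  "dsym lam k a b = \<i> * complex_of_real (En lam k a - En lam k b)"

lemma alpha_agree: "lagree (alpha lam t X) (\<lambda>m. schur (asym lam t m) (X m))"
  unfolding lagree_def
proof (intro allI impI)
  fix m a b :: nat assume ab: "a < 2^m" "b < 2^m"
  have d: "\<And>a b. a \<noteq> b \<Longrightarrow> expH lam m s a b = 0" for s unfolding expH_def by auto
  have "alpha lam t X m a b = (expH lam m t a a * X m a b) * expH lam m (-t) b b"
    unfolding alpha_def using ab
    by (simp add: mmul_diag_right[OF d] mmul_diag_left[OF d])
  also have "\<dots> = asym lam t m a b * X m a b"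
    unfolding expH_def asym_def Hmat_eq
    by (simp add: exp_diff[symmetric] mult_exp_exp[symmetric] algebra_simps flip: exp_add)
  finally show "alpha lam t X m a b = schur (asym lam t m) (X m) a b" unfolding schur_def .
qed

lemma delta_agree: "lagree (delta lam k X) (\<lambda>m. schur (dsym lam k) (X m))"
  unfolding lagree_def
proof (intro allI impI)
  fix m a b :: nat assume ab: "a < 2^m" "b < 2^m"
  have d: "\<And>a b. a \<noteq> b \<Longrightarrow> Hmat lam k a b = 0" unfolding Hmat_eq by auto
  show "delta lam k X m a b = schur (dsym lam k) (X m) a b"
    unfolding delta_def schur_def dsym_def using ab
    by (simp add: mmul_diag_right[OF d] mmul_diag_left[OF d] Hmat_eq algebra_simps)
qed

lemma compat_ch: "compat (\<lambda>m a b. g (ch a b))"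
  unfolding compat_def using ch_mod_fun by metis

lemma dsym_ch: "dsym lam k = (\<lambda>a b. \<i> * complex_of_real (\<Sum>i\<in>{1..k}. lam i * of_int (ch a b i)))"
  unfolding dsym_def En_diff by auto

lemma compat_dsym: "compat (\<lambda>m. dsym lam k)"
  unfolding dsym_ch by (rule compat_ch[where g = "\<lambda>c. \<i> * complex_of_real (\<Sum>i\<in>{1..k}. lam i * of_int (c i))"])

lemma sum_ch_high: assumes "a div 2^n = b div 2^n" "n \<le> m"
  shows "(\<Sum>i\<in>{1..m}. lam i * of_int (ch a b i)) = (\<Sum>i\<in>{1..n}. lam i * of_int (ch (a mod 2^n) (b mod 2^n) i))"
proof -
  have "(\<Sum>i\<in>{1..m}. lam i * of_int (ch a b i)) = (\<Sum>i\<in>{1..n}. lam i * of_int (ch a b i))"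
    using assms ch_high[OF assms(1)] by (intro sum.mono_neutral_right) auto
  also have "\<dots> = (\<Sum>i\<in>{1..n}. lam i * of_int (ch (a mod 2^n) (b mod 2^n) i))"
    using ch_mod[OF assms(1)] by simp
  finally show ?thesis .
qed

lemma compat_asym: "compat (asym lam t)"
  unfolding compat_def
proof (intro allI impI)
  fix m n a b :: nat assume "n \<le> m" "a div 2^n = b div 2^n"
  hence "En lam m a - En lam m b = En lam n (a mod 2^n) - En lam n (b mod 2^n)"
    unfolding En_diff by (rule sum_ch_high[OF _ _, rotated])
  thus "asym lam t m a b = asym lam t n (a mod 2^n) (b mod 2^n)" unfolding asym_def by simp
qed


definition site1 :: "nat \<Rightarrow> int \<Rightarrow> mat" where
  "site1 i v a b = (if ch a b i = v then 1 else 0)"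

definition Msc :: "nat set \<Rightarrow> (nat \<Rightarrow> int) \<Rightarrow> mat" where
  "Msc S c a b = (if \<forall>i\<in>S. ch a b i = c i then 1 else 0)"

lemma opnorm_zero: "opnorm d (\<lambda>a b. 0) = 0"
  using opnorm_scale[of d 0 "\<lambda>a b. 0"] by simp

lemma single_norm: "opnorm d (schur (site1 i v) w) \<le> opnorm d w"
proof -
  consider "v = 1" | "v = -1" | "v = 0" | "v \<notin> {-1,0,1}" by auto
  thus ?thesis
  proof cases
    case 1
    have "schur (site1 i v) w = (\<lambda>a b. of_bool (\<not> bit a (i - 1)) * of_bool (bit b (i - 1)) * w a b)"
      unfolding schur_def site1_def ch_def 1 by (intro ext) auto
    thus ?thesis using opnorm_rank1[of d "\<lambda>a. of_bool (\<not> bit a (i - 1))" 1 "\<lambda>b. of_bool (bit b (i - 1))" 1 w] by simp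
  next
    case 2
    have "schur (site1 i v) w = (\<lambda>a b. of_bool (bit a (i - 1)) * of_bool (\<not> bit b (i - 1)) * w a b)"
      unfolding schur_def site1_def ch_def 2 by (intro ext) auto
    thus ?thesis using opnorm_rank1[of d "\<lambda>a. of_bool (bit a (i - 1))" 1 "\<lambda>b. of_bool (\<not> bit b (i - 1))" 1 w] by simp
  next
    case 3
    define s where "s a = (if bit a (i - 1) then -1 else (1::complex))" for a :: nat
    have "schur (site1 i v) w = (\<lambda>a b. (1/2) * w a b + (1/2) * (s a * s b * w a b))"
      unfolding schur_def site1_def ch_def 3 s_def by (intro ext) auto
    hence "opnorm d (schur (site1 i v) w) \<le> opnorm d (\<lambda>a b. (1/2) * w a b) + opnorm d (\<lambda>a b. (1/2) * (s a * s b * w a b))"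
      using opnorm_triangle[of d "\<lambda>a b. (1/2) * w a b" "\<lambda>a b. (1/2) * (s a * s b * w a b)"] by simp
    also have "\<dots> = (1/2) * opnorm d w + (1/2) * opnorm d (\<lambda>a b. s a * s b * w a b)"
      by (simp only: opnorm_scale) simp
    also have "opnorm d (\<lambda>a b. s a * s b * w a b) \<le> 1 * 1 * opnorm d w"
      by (rule opnorm_rank1) (auto simp: s_def)
    finally show ?thesis by simp
  next
    case 4
    have "ch a b i \<noteq> v" for a b using ch_range[of a b i] 4 by auto
    hence "schur (site1 i v) w = (\<lambda>a b. 0)" unfolding schur_def site1_def by auto
    thus ?thesis using opnorm_nonneg by (simp add: opnorm_zero)
  qed
qed

lemma Msc_norm: "finite S \<Longrightarrow> opnorm d (schur (Msc S c) w) \<le> opnorm d w"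
proof (induction S rule: finite_induct)
  case empty
  have "schur (Msc {} c) w = w" unfolding schur_def Msc_def by auto
  thus ?case by simp
next
  case (insert i S)
  have "schur (Msc (insert i S) c) w = schur (site1 i (c i)) (schur (Msc S c) w)"
    unfolding schur_def Msc_def site1_def by (intro ext) auto
  thus ?case using single_norm[of d i "c i" "schur (Msc S c) w"] insert by simp
qed

definition Pjs :: "(nat \<Rightarrow> int) \<Rightarrow> mat" where
  "Pjs e a b = (if \<forall>i\<ge>1. ch a b i = e i then 1 else 0)"

definition Ejs :: "nat \<Rightarrow> mat" where
  "Ejs J a b = (if \<forall>i>J. ch a b i = 0 then 1 else 0)"

lemma Pjs_norm: "opnorm (2^m) (schur (Pjs e) w) \<le> opnorm (2^m) w"
proof (cases "\<forall>i>m. e i = 0")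
  case True
  have "opnorm (2^m) (schur (Pjs e) w) = opnorm (2^m) (schur (Msc {1..m} e) w)"
  proof (rule opnorm_cong)
    fix a b :: nat assume ab: "a < 2^m" "b < 2^m"
    have "(\<forall>i\<ge>1. ch a b i = e i) \<longleftrightarrow> (\<forall>i\<in>{1..m}. ch a b i = e i)"
      using ch_small[OF ab] True by (metis atLeastAtMost_iff not_le)
    thus "schur (Pjs e) w a b = schur (Msc {1..m} e) w a b" unfolding schur_def Pjs_def Msc_def by simp
  qed
  thus ?thesis using Msc_norm by simp
next
  case False
  then obtain j where j: "j > m" "e j \<noteq> 0" by auto
  have "opnorm (2^m) (schur (Pjs e) w) = opnorm (2^m) (\<lambda>a b. 0)"
  proof (rule opnorm_cong)
    fix a b :: nat assume ab: "a < 2^m" "b < 2^m"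
    have "ch a b j = 0" using ch_small[OF ab j(1)] .
    thus "schur (Pjs e) w a b = 0" unfolding schur_def Pjs_def using j by auto
  qed
  thus ?thesis using opnorm_nonneg by (simp add: opnorm_zero)
qed

lemma Ejs_norm: "opnorm (2^m) (schur (Ejs J) w) \<le> opnorm (2^m) w"
proof -
  have "opnorm (2^m) (schur (Ejs J) w) = opnorm (2^m) (schur (Msc {J<..m} (\<lambda>_. 0)) w)"
  proof (rule opnorm_cong)
    fix a b :: nat assume ab: "a < 2^m" "b < 2^m"
    have "(\<forall>i>J. ch a b i = 0) \<longleftrightarrow> (\<forall>i\<in>{J<..m}. ch a b i = 0)"
      using ch_small[OF ab] by (metis greaterThanAtMost_iff not_le)
    thus "schur (Ejs J) w a b = schur (Msc {J<..m} (\<lambda>_. 0)) w a b" unfolding schur_def Ejs_def Msc_def by simp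
  qed
  thus ?thesis using Msc_norm by simp
qed

lemma compat_Pjs: "compat (\<lambda>m. Pjs e)"
  unfolding Pjs_def by (rule compat_ch[where g = "\<lambda>c. if \<forall>i\<ge>1. c i = e i then 1 else 0"])

lemma compat_Ejs: "compat (\<lambda>m. Ejs J)"
  unfolding Ejs_def by (rule compat_ch[where g = "\<lambda>c. if \<forall>i>J. c i = 0 then 1 else 0"])

definition PjS :: "(nat \<Rightarrow> int) \<Rightarrow> (nat \<Rightarrow> mat) \<Rightarrow> (nat \<Rightarrow> mat)" where
  "PjS e X = (\<lambda>m. schur (Pjs e) (X m))"

definition EjS :: "nat \<Rightarrow> (nat \<Rightarrow> mat) \<Rightarrow> (nat \<Rightarrow> mat)" where
  "EjS J X = (\<lambda>m. schur (Ejs J) (X m))"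

lemma uhf_PjS: "is_uhf X \<Longrightarrow> is_uhf (PjS e X)"
  unfolding PjS_def using uhf_schur(1)[OF compat_Pjs, of 1] Pjs_norm by simp

lemma anorm_PjS: "is_uhf X \<Longrightarrow> anorm (PjS e X) \<le> anorm X"
  unfolding PjS_def using uhf_schur(2)[OF compat_Pjs, of 1] Pjs_norm by simp

lemma uhf_EjS: "is_uhf X \<Longrightarrow> is_uhf (EjS J X)"
  unfolding EjS_def using uhf_schur(1)[OF compat_Ejs, of 1] Ejs_norm by simp

lemma anorm_EjS: "is_uhf X \<Longrightarrow> anorm (EjS J X) \<le> anorm X"
  unfolding EjS_def using uhf_schur(2)[OF compat_Ejs, of 1] Ejs_norm by simp

lemma asym_norm: "opnorm d (schur (asym lam t m) w) \<le> opnorm d w"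
proof -
  have eq: "schur (asym lam t m) w = (\<lambda>a b. exp (\<i> * complex_of_real (t * En lam m a)) * exp (- (\<i> * complex_of_real (t * En lam m b))) * w a b)"
    unfolding schur_def asym_def by (intro ext) (simp add: algebra_simps flip: exp_add)
  have "opnorm d (\<lambda>a b. exp (\<i> * complex_of_real (t * En lam m a)) * exp (- (\<i> * complex_of_real (t * En lam m b))) * w a b) \<le> 1 * 1 * opnorm d w"
    by (rule opnorm_rank1) (auto simp: norm_exp_i_times norm_exp)
  thus ?thesis using eq by simp
qed

lemma uhf_alpha: assumes "is_uhf X" shows "is_uhf (alpha lam t X)"
proof -
  have "is_uhf (\<lambda>m. schur (asym lam t m) (X m))"
    using uhf_schur(1)[OF compat_asym, of 1] asym_norm assms by simp
  thus ?thesis using uhf_cong[OF alpha_agree] by blast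
qed

lemma En_bounds: assumes "\<forall>i\<ge>1. 0 \<le> lam i"
  shows "0 \<le> En lam k a" "En lam k a \<le> (\<Sum>i\<in>{1..k}. lam i)"
  using assms unfolding En_def by (auto intro!: sum_nonneg sum_mono)

lemma dsym_norm: assumes "\<forall>i\<ge>1. 0 \<le> lam i"
  shows "opnorm d (schur (dsym lam k) w) \<le> (2 * (\<Sum>i\<in>{1..k}. lam i)) * opnorm d w"
proof -
  define L where "L = (\<Sum>i\<in>{1..k}. lam i)"
  have L: "0 \<le> L" unfolding L_def using assms by (auto intro!: sum_nonneg)
  have "schur (dsym lam k) w = (\<lambda>a b. (\<i> * En lam k a) * 1 * w a b + 1 * (- \<i> * En lam k b) * w a b)"
    unfolding schur_def dsym_def by (intro ext) (simp add: algebra_simps)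
  hence "opnorm d (schur (dsym lam k) w) \<le> opnorm d (\<lambda>a b. (\<i> * En lam k a) * 1 * w a b) + opnorm d (\<lambda>a b. 1 * (- \<i> * En lam k b) * w a b)"
    using opnorm_triangle[of d "\<lambda>a b. (\<i> * En lam k a) * 1 * w a b" "\<lambda>a b. 1 * (- \<i> * En lam k b) * w a b"] by simp
  also have "opnorm d (\<lambda>a b. (\<i> * En lam k a) * 1 * w a b) \<le> L * 1 * opnorm d w"
    using En_bounds[OF assms] L by (intro opnorm_rank1) (auto simp: norm_mult L_def)
  also have "opnorm d (\<lambda>a b. 1 * (- \<i> * En lam k b) * w a b) \<le> 1 * L * opnorm d w"
    using En_bounds[OF assms] L by (intro opnorm_rank1) (auto simp: norm_mult L_def)
  finally show ?thesis unfolding L_def by (simp add: algebra_simps)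
qed

lemma uhf_delta: assumes "\<forall>i\<ge>1. 0 \<le> lam i" "is_uhf X" shows "is_uhf (delta lam k X)"
proof -
  have "0 \<le> 2 * (\<Sum>i\<in>{1..k}. lam i)" using assms by (auto intro!: sum_nonneg)
  hence "is_uhf (\<lambda>m. schur (dsym lam k) (X m))"
    using uhf_schur(1)[OF compat_dsym, of "2 * (\<Sum>i\<in>{1..k}. lam i)"] dsym_norm[OF assms(1)] assms(2) by simp
  thus ?thesis using uhf_cong[OF delta_agree] by blast
qed


definition Sec :: "nat \<Rightarrow> (nat \<Rightarrow> int) set" where
  "Sec J = {e. (\<forall>i. e i \<in> {-1, 0, 1}) \<and> (\<forall>i. (i = 0 \<or> J < i) \<longrightarrow> e i = 0)}"

definition Om :: "(nat \<Rightarrow> real) \<Rightarrow> nat \<Rightarrow> (nat \<Rightarrow> int) \<Rightarrow> real" where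
  "Om lam J e = (\<Sum>i\<in>{1..J}. lam i * of_int (e i))"

lemma Sec_0: "Sec 0 = {\<lambda>_. 0}"
  unfolding Sec_def by (auto simp: fun_eq_iff)

lemma Sec_upd: "e \<in> Sec J \<Longrightarrow> c \<in> {-1,0,1} \<Longrightarrow> e(Suc J := c) \<in> Sec (Suc J)"
  unfolding Sec_def by auto

lemma Sec_top: "e \<in> Sec J \<Longrightarrow> e (Suc J) = 0"
  unfolding Sec_def by auto

lemma Sec_mono: "e \<in> Sec J \<Longrightarrow> J \<le> K \<Longrightarrow> e \<in> Sec K"
  unfolding Sec_def by auto

lemma img_upd_val: "v \<in> (\<lambda>e. e(Suc J := c)) ` A \<Longrightarrow> v (Suc J) = c"
  by auto

lemma Sec_Suc: "Sec (Suc J) = Sec J \<union> (\<lambda>e. e(Suc J := 1)) ` Sec J \<union> (\<lambda>e. e(Suc J := -1)) ` Sec J"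
proof (intro equalityI subsetI)
  fix e assume e: "e \<in> Sec (Suc J)"
  define e0 where "e0 = e(Suc J := 0)"
  have e0: "e0 \<in> Sec J" using e unfolding Sec_def e0_def by auto
  have r: "e (Suc J) \<in> {-1,0,1}" using e unfolding Sec_def by auto
  have ee: "e = e0(Suc J := e (Suc J))" unfolding e0_def by auto
  have e00: "e0(Suc J := 0) = e0" unfolding e0_def by auto
  from r consider "e (Suc J) = 0" | "e (Suc J) = 1" | "e (Suc J) = -1" by auto
  thus "e \<in> Sec J \<union> (\<lambda>e. e(Suc J := 1)) ` Sec J \<union> (\<lambda>e. e(Suc J := -1)) ` Sec J"
  proof cases
    case 1 hence "e = e0" using ee e00 by simp
    thus ?thesis using e0 by simp
  next
    case 2 hence "e = e0(Suc J := 1)" using ee by simp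
    thus ?thesis using e0 by blast
  next
    case 3 hence "e = e0(Suc J := -1)" using ee by simp
    thus ?thesis using e0 by blast
  qed
next
  fix e assume "e \<in> Sec J \<union> (\<lambda>e. e(Suc J := 1)) ` Sec J \<union> (\<lambda>e. e(Suc J := -1)) ` Sec J"
  thus "e \<in> Sec (Suc J)" using Sec_upd[of _ J] Sec_mono[of _ J "Suc J"] by auto
qed

lemma finite_Sec: "finite (Sec J)"
  by (induction J) (auto simp: Sec_0 Sec_Suc)

lemma inj_upd: "inj_on (\<lambda>e. e(Suc J := c)) (Sec J)"
  unfolding inj_on_def
proof (intro ballI impI)
  fix e e' assume "e \<in> Sec J" "e' \<in> Sec J" "e(Suc J := c) = e'(Suc J := c)"
  thus "e = e'" using Sec_top[of e J] Sec_top[of e' J] by (metis fun_upd_triv fun_upd_upd)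
qed

lemma sum_Sec_Suc: "(\<Sum>e\<in>Sec (Suc J). f e) = (\<Sum>e\<in>Sec J. f e) + (\<Sum>e\<in>Sec J. f (e(Suc J := 1))) + (\<Sum>e\<in>Sec J. f (e(Suc J := -1)))"
proof -
  define A where "A = Sec J"
  define B where "B = (\<lambda>e. e(Suc J := 1)) ` Sec J"
  define C where "C = (\<lambda>e. e(Suc J := -1)) ` Sec J"
  have fA: "finite A" "finite B" "finite C" unfolding A_def B_def C_def using finite_Sec by auto
  have vA: "v (Suc J) = 0" if "v \<in> A" for v using that Sec_top unfolding A_def by blast
  have vB: "v (Suc J) = 1" if "v \<in> B" for v using that unfolding B_def by auto
  have vC: "v (Suc J) = -1" if "v \<in> C" for v using that unfolding C_def by auto
  have d1: "A \<inter> B = {}"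
  proof (rule equals0I)
    fix v assume "v \<in> A \<inter> B"
    thus False using vA vB by force
  qed
  have d2: "(A \<union> B) \<inter> C = {}"
  proof (rule equals0I)
    fix v assume "v \<in> (A \<union> B) \<inter> C"
    thus False using vA vB vC by force
  qed
  have "(\<Sum>e\<in>Sec (Suc J). f e) = (\<Sum>e\<in>A \<union> B \<union> C. f e)"
    unfolding A_def B_def C_def Sec_Suc ..
  also have "\<dots> = (\<Sum>e\<in>A \<union> B. f e) + (\<Sum>e\<in>C. f e)"
    by (rule sum.union_disjoint) (use fA d2 in auto)
  also have "(\<Sum>e\<in>A \<union> B. f e) = (\<Sum>e\<in>A. f e) + (\<Sum>e\<in>B. f e)"
    by (rule sum.union_disjoint) (use fA d1 in auto)
  also have "(\<Sum>e\<in>B. f e) = (\<Sum>e\<in>Sec J. f (e(Suc J := 1)))"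
    unfolding B_def by (rule sum.reindex[OF inj_upd, unfolded comp_def])
  also have "(\<Sum>e\<in>C. f e) = (\<Sum>e\<in>Sec J. f (e(Suc J := -1)))"
    unfolding C_def by (rule sum.reindex[OF inj_upd, unfolded comp_def])
  finally show ?thesis unfolding A_def .
qed

lemma card_Sec: "card (Sec J) = 3^J"
proof (induction J)
  case 0 thus ?case by (simp add: Sec_0)
next
  case (Suc J)
  have "card (Sec (Suc J)) = (\<Sum>e\<in>Sec (Suc J). 1)" by simp
  also have "\<dots> = 3 * card (Sec J)" by (subst sum_Sec_Suc) simp
  finally show ?case using Suc by simp
qed

lemma Om_upd: "e \<in> Sec J \<Longrightarrow> Om lam (Suc J) (e(Suc J := c)) = Om lam J e + lam (Suc J) * of_int c"
  unfolding Om_def by (auto intro!: sum.cong)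

lemma Om_Suc: "e \<in> Sec J \<Longrightarrow> Om lam (Suc J) e = Om lam J e"
  using Om_upd[of e J lam 0] Sec_top[of e J] by (metis fun_upd_triv mult_zero_right of_int_0 add_0_right)

lemma Om_mono: assumes "e \<in> Sec J" "J \<le> K" shows "Om lam K e = Om lam J e"
  using assms(2)
proof (induction K rule: dec_induct)
  case base show ?case by simp
next
  case (step K) thus ?case using Om_Suc[OF Sec_mono[OF assms(1) step(1)]] by simp
qed

lemma Om_abs_le: assumes "\<forall>i\<ge>1. 0 \<le> lam i" "e \<in> Sec J"
  shows "\<bar>Om lam J e\<bar> \<le> (\<Sum>i\<in>{1..J}. lam i)"
proof -
  have "\<bar>Om lam J e\<bar> \<le> (\<Sum>i\<in>{1..J}. \<bar>lam i * of_int (e i)\<bar>)" unfolding Om_def by (rule sum_abs)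
  also have "\<dots> \<le> (\<Sum>i\<in>{1..J}. lam i)"
  proof (rule sum_mono)
    fix i assume i: "i \<in> {1..J}"
    have "e i \<in> {-1,0,1}" using assms(2) unfolding Sec_def by blast
    hence "\<bar>e i\<bar> \<le> 1" by auto
    hence "\<bar>real_of_int (e i)\<bar> \<le> 1" by linarith
    thus "\<bar>lam i * of_int (e i)\<bar> \<le> lam i" using assms(1) i by (auto simp: abs_mult intro: mult_left_le)
  qed
  finally show ?thesis .
qed

locale lamcond =
  fixes lam :: "nat \<Rightarrow> real"
  assumes pos: "\<forall>i\<ge>1. lam i > 0"
    and grow: "\<forall>n\<ge>1. lam n \<ge> 2 * (\<Sum>i\<in>{1..<n}. lam i) + 6 ^ n"
begin

lemma nonneg: "\<forall>i\<ge>1. 0 \<le> lam i" using pos by (simp add: order_less_imp_le)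

lemma grow': "lam (Suc J) \<ge> 2 * (\<Sum>i\<in>{1..J}. lam i) + 6 ^ Suc J"
proof -
  have "{1..<Suc J} = {1..J}" by auto
  thus ?thesis using grow[rule_format, of "Suc J"] by simp
qed

lemma sumlam_nonneg: "0 \<le> (\<Sum>i\<in>{1..J}. lam i)" using nonneg by (auto intro!: sum_nonneg)

lemma Om_new: assumes "e \<in> Sec J" "c \<in> {-1, 1}"
  shows "\<bar>Om lam (Suc J) (e(Suc J := c))\<bar> \<ge> lam (Suc J) - (\<Sum>i\<in>{1..J}. lam i)"
    and "lam (Suc J) - (\<Sum>i\<in>{1..J}. lam i) \<ge> (\<Sum>i\<in>{1..J}. lam i) + 6 ^ Suc J"
proof -
  have "\<bar>Om lam J e\<bar> \<le> (\<Sum>i\<in>{1..J}. lam i)" using Om_abs_le[OF nonneg assms(1)] .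
  thus "\<bar>Om lam (Suc J) (e(Suc J := c))\<bar> \<ge> lam (Suc J) - (\<Sum>i\<in>{1..J}. lam i)"
    using Om_upd[OF assms(1), of lam c] assms(2) by auto
  show "lam (Suc J) - (\<Sum>i\<in>{1..J}. lam i) \<ge> (\<Sum>i\<in>{1..J}. lam i) + 6 ^ Suc J" using grow' by simp
qed

lemma Om_nz: "e \<in> Sec J \<Longrightarrow> e \<noteq> (\<lambda>_. 0) \<Longrightarrow> Om lam J e \<noteq> 0"
proof (induction J arbitrary: e)
  case 0 thus ?case by (simp add: Sec_0)
next
  case (Suc J)
  from Suc.prems(1) consider "e \<in> Sec J" | e' c where "e' \<in> Sec J" "c \<in> {-1,1}" "e = e'(Suc J := c)"
    unfolding Sec_Suc by blast
  thus ?case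
  proof cases
    case 1 thus ?thesis using Suc Om_Suc by simp
  next
    case 2
    have "\<bar>Om lam (Suc J) e\<bar> \<ge> 6 ^ Suc J" using Om_new[OF 2(1,2)] 2(3) sumlam_nonneg[of J] by simp
    moreover have "(6::real) ^ Suc J > 0" by simp
    ultimately show ?thesis by linarith
  qed
qed

lemma C1: "(\<Sum>e\<in>Sec J. 1 / \<bar>Om lam J e\<bar>) \<le> 1 - (1/2)^J"
proof (induction J)
  case 0 thus ?case by (simp add: Sec_0 Om_def)
next
  case (Suc J)
  have new: "(\<Sum>e\<in>Sec J. 1 / \<bar>Om lam (Suc J) (e(Suc J := c))\<bar>) \<le> 3^J / 6^Suc J" if c: "c \<in> {-1,1}" for c
  proof -
    have "(\<Sum>e\<in>Sec J. 1 / \<bar>Om lam (Suc J) (e(Suc J := c))\<bar>) \<le> of_nat (card (Sec J)) * (1 / 6^Suc J)"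
    proof (rule sum_bounded_above)
      fix e assume e: "e \<in> Sec J"
      have "\<bar>Om lam (Suc J) (e(Suc J := c))\<bar> \<ge> 6^Suc J" using Om_new[OF e c] sumlam_nonneg[of J] by simp
      thus "1 / \<bar>Om lam (Suc J) (e(Suc J := c))\<bar> \<le> 1 / 6^Suc J"
        by (intro frac_le) auto
    qed
    thus ?thesis by (simp add: card_Sec)
  qed
  have "(\<Sum>e\<in>Sec (Suc J). 1 / \<bar>Om lam (Suc J) e\<bar>) = (\<Sum>e\<in>Sec J. 1 / \<bar>Om lam J e\<bar>) + (\<Sum>e\<in>Sec J. 1 / \<bar>Om lam (Suc J) (e(Suc J := 1))\<bar>) + (\<Sum>e\<in>Sec J. 1 / \<bar>Om lam (Suc J) (e(Suc J := -1))\<bar>)"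
    by (subst sum_Sec_Suc) (simp add: Om_Suc cong: sum.cong)
  also have "\<dots> \<le> (1 - (1/2)^J) + 3^J / 6^Suc J + 3^J / 6^Suc J"
    using Suc new[of 1] new[of "-1"] by (intro add_mono) auto
  also have "\<dots> \<le> 1 - (1/2)^Suc J"
  proof -
    have h: "(3::real)^J / 6^J = (1/2)^J" by (simp add: power_divide[symmetric])
    have "(3::real)^J / 6^Suc J = (1/6) * (3^J / 6^J)" by simp
    hence "(3::real)^J / 6^Suc J = (1/6) * (1/2)^J" using h by simp
    thus ?thesis by simp
  qed
  finally show ?case .
qed

lemma C1': "(\<Sum>e\<in>Sec J. 1 / \<bar>Om lam J e\<bar>) \<le> 1"
  using C1[of J] by (smt (verit) zero_le_power zero_le_divide_iff)

lemma ratio_bound: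
  fixes L s q :: real
  assumes "0 \<le> s" "0 < q" "L \<ge> 2 * s + q"
  shows "(L + s) / (L - s)^2 \<le> 3 / (2 * q)"
proof -
  define u where "u = L - s"
  have u: "u \<ge> s + q" using assms unfolding u_def by simp
  have up: "u > 0" using u assms by simp
  have "L + s \<le> 3 * u - 2 * q" using u unfolding u_def by simp
  moreover have "2 * q * (3 * u - 2 * q) \<le> 3 * u^2"
  proof -
    have "0 \<le> 3 * (u - q)^2 + q^2" by simp
    thus ?thesis by (simp add: power2_eq_square algebra_simps)
  qed
  ultimately have "2 * q * (L + s) \<le> 3 * u^2"
    using assms(2) by (smt (verit) mult_left_mono)
  hence "(L + s) / u^2 \<le> 3 / (2 * q)" using up assms(2) by (simp add: field_simps)
  thus ?thesis unfolding u_def .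
qed

definition cS :: "nat set \<Rightarrow> (nat \<Rightarrow> int) \<Rightarrow> real" where
  "cS S e = (\<Sum>i\<in>S. lam i * of_int (e i))"

lemma cS_zero: "e \<in> Sec J \<Longrightarrow> S \<subseteq> {k<..} \<Longrightarrow> J \<le> k \<Longrightarrow> cS S e = 0"
  unfolding cS_def Sec_def by (intro sum.neutral) auto

lemma cS_le: assumes "e \<in> Sec J" "S \<subseteq> {k<..}" "finite S" shows "\<bar>cS S e\<bar> \<le> (\<Sum>i\<in>{1..J}. lam i)"
proof -
  have "\<bar>cS S e\<bar> \<le> (\<Sum>i\<in>S. \<bar>lam i * of_int (e i)\<bar>)" unfolding cS_def by (rule sum_abs)
  also have "\<dots> = (\<Sum>i\<in>S \<inter> {1..J}. \<bar>lam i * of_int (e i)\<bar>)"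
  proof (rule sum.mono_neutral_right)
    show "\<forall>i\<in>S - S \<inter> {1..J}. \<bar>lam i * of_int (e i)\<bar> = 0"
    proof
      fix i assume i: "i \<in> S - S \<inter> {1..J}"
      hence "i > k" using assms(2) by auto
      hence "i \<noteq> 0" by simp
      hence "J < i" using i by auto
      hence "e i = 0" using assms(1) unfolding Sec_def by auto
      thus "\<bar>lam i * of_int (e i)\<bar> = 0" by simp
    qed
  qed (use assms in auto)
  also have "\<dots> \<le> (\<Sum>i\<in>{1..J}. \<bar>lam i * of_int (e i)\<bar>)"
    by (intro sum_mono2) auto
  also have "\<dots> \<le> (\<Sum>i\<in>{1..J}. lam i)"
  proof (rule sum_mono)
    fix i assume i: "i \<in> {1..J}"
    have "e i \<in> {-1,0,1}" using assms(1) unfolding Sec_def by blast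
    hence "\<bar>e i\<bar> \<le> 1" by auto
    hence "\<bar>real_of_int (e i)\<bar> \<le> 1" by linarith
    thus "\<bar>lam i * of_int (e i)\<bar> \<le> lam i" using nonneg i by (auto simp: abs_mult intro: mult_left_le)
  qed
  finally show ?thesis .
qed

lemma C2_aux: assumes "S \<subseteq> {k<..}" "finite S"
  shows "k \<le> J \<Longrightarrow> (\<Sum>e\<in>Sec J. \<bar>cS S e\<bar> / (Om lam J e)^2) \<le> (1/2)^k - (1/2)^J"
proof (induction J)
  case 0
  thus ?case using cS_zero[OF _ assms(1)] by (simp add: Sec_0)
next
  case (Suc J)
  show ?case
  proof (cases "Suc J \<le> k")
    case True
    hence "k = Suc J" using Suc.prems by simp
    thus ?thesis using cS_zero[OF _ assms(1), of _ "Suc J"] by simp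
  next
    case False
    hence kJ: "k \<le> J" by simp
    define L where "L = lam (Suc J)"
    define s where "s = (\<Sum>i\<in>{1..J}. lam i)"
    have s0: "0 \<le> s" unfolding s_def by (rule sumlam_nonneg)
    have Ls: "L \<ge> 2 * s + 6^Suc J" unfolding L_def s_def using grow' .
    have new: "(\<Sum>e\<in>Sec J. \<bar>cS S (e(Suc J := c))\<bar> / (Om lam (Suc J) (e(Suc J := c)))^2) \<le> 3^J * (3 / (2 * 6^Suc J))"
      if c: "c \<in> {-1,1}" for c
    proof -
      have "(\<Sum>e\<in>Sec J. \<bar>cS S (e(Suc J := c))\<bar> / (Om lam (Suc J) (e(Suc J := c)))^2) \<le> of_nat (card (Sec J)) * (3 / (2 * 6^Suc J))"
      proof (rule sum_bounded_above)
        fix e assume e: "e \<in> Sec J"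
        have e': "e(Suc J := c) \<in> Sec (Suc J)" using Sec_upd[OF e] c by auto
        have num: "\<bar>cS S (e(Suc J := c))\<bar> \<le> L + s"
          using cS_le[OF e' assms] unfolding L_def s_def by simp
        have den: "\<bar>Om lam (Suc J) (e(Suc J := c))\<bar> \<ge> L - s" using Om_new(1)[OF e c] unfolding L_def s_def .
        have Lsp: "L - s > 0" using Ls s0 by (smt (verit) zero_less_power)
        have "(L - s)^2 \<le> (Om lam (Suc J) (e(Suc J := c)))^2"
          using den Lsp by (metis abs_le_square_iff abs_of_pos less_imp_le)
        hence "\<bar>cS S (e(Suc J := c))\<bar> / (Om lam (Suc J) (e(Suc J := c)))^2 \<le> (L + s) / (L - s)^2"
          using num Lsp by (intro frac_le) auto
        also have "\<dots> \<le> 3 / (2 * 6^Suc J)" using ratio_bound[OF s0 _ Ls] by simp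
        finally show "\<bar>cS S (e(Suc J := c))\<bar> / (Om lam (Suc J) (e(Suc J := c)))^2 \<le> 3 / (2 * 6^Suc J)" .
      qed
      thus ?thesis by (simp add: card_Sec)
    qed
    have "(\<Sum>e\<in>Sec (Suc J). \<bar>cS S e\<bar> / (Om lam (Suc J) e)^2) = (\<Sum>e\<in>Sec J. \<bar>cS S e\<bar> / (Om lam J e)^2) + (\<Sum>e\<in>Sec J. \<bar>cS S (e(Suc J := 1))\<bar> / (Om lam (Suc J) (e(Suc J := 1)))^2) + (\<Sum>e\<in>Sec J. \<bar>cS S (e(Suc J := -1))\<bar> / (Om lam (Suc J) (e(Suc J := -1)))^2)"
      by (subst sum_Sec_Suc) (simp add: Om_Suc cong: sum.cong)
    also have "\<dots> \<le> ((1/2)^k - (1/2)^J) + 3^J * (3 / (2 * 6^Suc J)) + 3^J * (3 / (2 * 6^Suc J))"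
      using Suc.IH[OF kJ] new[of 1] new[of "-1"] by (intro add_mono) auto
    also have "\<dots> = (1/2)^k - (1/2)^Suc J"
    proof -
      have h: "(3::real)^J / 6^J = (1/2)^J" by (simp add: power_divide[symmetric])
      have "(3::real)^J * (3 / (2 * 6^Suc J)) = (1/4) * (3^J / 6^J)" by simp
      hence "(3::real)^J * (3 / (2 * 6^Suc J)) = (1/4) * (1/2)^J" using h by simp
      thus ?thesis by simp
    qed
    finally show ?thesis .
  qed
qed

lemma C2: assumes "S \<subseteq> {k<..}" "finite S"
  shows "(\<Sum>e\<in>Sec J. \<bar>cS S e\<bar> / (Om lam J e)^2) \<le> (1/2)^k"
proof (cases "k \<le> J")
  case True
  have "(0::real) \<le> (1/2)^J" by simp
  thus ?thesis using C2_aux[OF assms True] by linarith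
next
  case False thus ?thesis using cS_zero[OF _ assms(1), of _ J] by simp
qed

end


lemma ctlim: "((\<lambda>t::real. complex_of_real (1/t) * (exp (\<i> * complex_of_real (t * W)) - 1)) \<longlongrightarrow> \<i> * complex_of_real W) (at 0)"
proof -
  define c where "c = \<i> * complex_of_real W"
  define F where "F z = exp (c * z)" for z :: complex
  have "(F has_field_derivative (exp (c * 0) * c)) (at 0)"
    unfolding F_def by (auto intro!: derivative_eq_intros)
  hence "(F has_field_derivative c) (at 0)" by simp
  hence g: "((\<lambda>h. (F (0 + h) - F 0) / h) \<longlongrightarrow> c) (at 0)" by (simp add: DERIV_def)
  have f: "(complex_of_real \<longlongrightarrow> 0) (at (0::real))"
    by (rule tendsto_eq_intros) (auto intro: tendsto_ident_at)
  have ev: "eventually (\<lambda>w. complex_of_real w = 0 \<longrightarrow> (F (0 + 0) - F 0) / 0 = c) (at (0::real))"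
    unfolding eventually_at_filter by simp
  have "(((\<lambda>h. (F (0 + h) - F 0) / h) \<circ> complex_of_real) \<longlongrightarrow> c) (at 0)"
    by (rule tendsto_compose_at[OF f g ev])
  moreover have "((\<lambda>h. (F (0 + h) - F 0) / h) \<circ> complex_of_real) = (\<lambda>t::real. complex_of_real (1/t) * (exp (\<i> * complex_of_real (t * W)) - 1))"
    unfolding F_def c_def comp_def by (intro ext) (simp add: divide_inverse ac_simps)
  ultimately show ?thesis unfolding c_def by simp
qed

lemma lagree_refl: "lagree X X" unfolding lagree_def by simp

lemma PjS_adiff: "PjS e (adiff X Y) = adiff (PjS e X) (PjS e Y)"
  unfolding PjS_def adiff_def schur_def mdiff_def by (auto simp: fun_eq_iff algebra_simps)

lemma PjS_ascale: "PjS e (ascale c X) = ascale c (PjS e X)"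
  unfolding PjS_def ascale_def schur_def by (auto simp: fun_eq_iff algebra_simps)

lemma adiff_ascale: "adiff (ascale c X) (ascale d X) = ascale (c - d) X"
  unfolding adiff_def ascale_def mdiff_def by (auto simp: fun_eq_iff algebra_simps)

lemma sum_ch_ext: assumes "a < 2^m" "b < 2^m" "m \<le> K"
  shows "(\<Sum>i\<in>{1..m}. lam i * of_int (ch a b i)) = (\<Sum>i\<in>{1..K}. lam i * of_int (ch a b i))"
  using assms ch_small[OF assms(1,2)] by (intro sum.mono_neutral_left) auto

lemma sector_En: assumes "e \<in> Sec J" "a < 2^m" "b < 2^m" "\<forall>i\<ge>1. ch a b i = e i"
  shows "En lam m a - En lam m b = Om lam J e"
proof -
  define K where "K = max m J"
  have "En lam m a - En lam m b = (\<Sum>i\<in>{1..K}. lam i * of_int (ch a b i))"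
    unfolding En_diff K_def by (rule sum_ch_ext[OF assms(2,3)]) simp
  also have "\<dots> = Om lam K e" unfolding Om_def
  proof (rule sum.cong[OF refl])
    fix i assume "i \<in> {1..K}"
    hence "1 \<le> i" by simp
    hence "ch a b i = e i" using assms(4) by blast
    thus "lam i * of_int (ch a b i) = lam i * of_int (e i)" by simp
  qed
  also have "\<dots> = Om lam J e" by (rule Om_mono[OF assms(1)]) (simp add: K_def)
  finally show ?thesis .
qed

lemma Pjs_1: "\<forall>i\<ge>1. ch a b i = e i \<Longrightarrow> Pjs e a b = 1" unfolding Pjs_def by simp
lemma Pjs_0: "\<not> (\<forall>i\<ge>1. ch a b i = e i) \<Longrightarrow> Pjs e a b = 0" unfolding Pjs_def by simp

lemma PjS_alpha_gen: assumes "e \<in> Sec J"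
  shows "lagree (PjS e (adiff (ascale (complex_of_real (1/t)) (adiff (alpha lam t X) X)) Y))
                (adiff (ascale (complex_of_real (1/t) * (exp (\<i> * complex_of_real (t * Om lam J e)) - 1)) (PjS e X)) (PjS e Y))"
  unfolding lagree_def
proof (intro allI impI)
  fix m a b :: nat assume ab: "a < 2^m" "b < 2^m"
  have al: "alpha lam t X m a b = asym lam t m a b * X m a b"
    using alpha_agree[of lam t X] ab unfolding lagree_def schur_def by simp
  show "PjS e (adiff (ascale (complex_of_real (1/t)) (adiff (alpha lam t X) X)) Y) m a b =
        adiff (ascale (complex_of_real (1/t) * (exp (\<i> * complex_of_real (t * Om lam J e)) - 1)) (PjS e X)) (PjS e Y) m a b"
  proof (cases "\<forall>i\<ge>1. ch a b i = e i")
    case True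
    have "asym lam t m a b = exp (\<i> * complex_of_real (t * Om lam J e))"
      unfolding asym_def using sector_En[OF assms ab True] by simp
    thus ?thesis using al unfolding PjS_def adiff_def ascale_def schur_def mdiff_def Pjs_1[OF True]
      by (simp add: algebra_simps)
  next
    case False
    show ?thesis unfolding PjS_def adiff_def ascale_def schur_def mdiff_def Pjs_0[OF False] by simp
  qed
qed

lemma PjS_delta: "lagree (PjS e (delta lam k X)) (ascale (\<i> * complex_of_real (Om lam k e)) (PjS e X))"
  unfolding lagree_def
proof (intro allI impI)
  fix m a b :: nat assume ab: "a < 2^m" "b < 2^m"
  have dl: "delta lam k X m a b = dsym lam k a b * X m a b"
    using delta_agree[of lam k X] ab unfolding lagree_def schur_def by simp
  show "PjS e (delta lam k X) m a b = ascale (\<i> * complex_of_real (Om lam k e)) (PjS e X) m a b"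
  proof (cases "\<forall>i\<ge>1. ch a b i = e i")
    case True
    have "dsym lam k a b = \<i> * complex_of_real (Om lam k e)"
      unfolding dsym_ch Om_def using True by simp
    thus ?thesis using dl unfolding PjS_def ascale_def schur_def Pjs_1[OF True] by simp
  next
    case False
    show ?thesis unfolding PjS_def ascale_def schur_def Pjs_0[OF False] by simp
  qed
qed

context lamcond
begin

lemma gen_sector: assumes g: "is_gen lam X Y" and e: "e \<in> Sec J"
  shows "anorm (adiff (PjS e Y) (ascale (\<i> * complex_of_real (Om lam J e)) (PjS e X))) = 0"
proof -
  have X: "is_uhf X" and Y: "is_uhf Y" using g unfolding is_gen_def by auto
  define G where "G t = adiff (ascale (complex_of_real (1/t)) (adiff (alpha lam t X) X)) Y" for t
  have lim: "((\<lambda>t. anorm (G t)) \<longlongrightarrow> 0) (at 0)" using g unfolding is_gen_def G_def by auto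
  have uG: "is_uhf (G t)" for t unfolding G_def by (intro uhf_adiff uhf_ascale uhf_alpha X Y)
  define W where "W = Om lam J e"
  define c where "c t = complex_of_real (1/t) * (exp (\<i> * complex_of_real (t * W)) - 1)" for t
  define PX where "PX = PjS e X"
  define PY where "PY = PjS e Y"
  have PX: "is_uhf PX" unfolding PX_def by (rule uhf_PjS[OF X])
  have PY: "is_uhf PY" unfolding PY_def by (rule uhf_PjS[OF Y])
  define V where "V = anorm (adiff PY (ascale (\<i> * complex_of_real W) PX))"
  have bound: "V \<le> anorm (G t) + cmod (c t - \<i> * complex_of_real W) * anorm PX" for t
  proof -
    have "V \<le> anorm (adiff PY (ascale (c t) PX)) + anorm (adiff (ascale (c t) PX) (ascale (\<i> * complex_of_real W) PX))"
      unfolding V_def by (rule anorm_tri) (auto intro: PY PX uhf_ascale)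
    also have "anorm (adiff PY (ascale (c t) PX)) = anorm (PjS e (G t))"
      using anorm_cong[OF PjS_alpha_gen[OF e, of t lam X Y]]
      unfolding G_def c_def W_def PX_def PY_def by (simp add: anorm_adiff_sym)
    also have "\<dots> \<le> anorm (G t)" by (rule anorm_PjS[OF uG])
    also have "anorm (adiff (ascale (c t) PX) (ascale (\<i> * complex_of_real W) PX)) = cmod (c t - \<i> * complex_of_real W) * anorm PX"
      unfolding adiff_ascale by (rule anorm_ascale[OF PX])
    finally show ?thesis by simp
  qed
  have climit: "((\<lambda>t. cmod (c t - \<i> * complex_of_real W)) \<longlongrightarrow> 0) (at 0)"
  proof -
    have "((\<lambda>t. c t - \<i> * complex_of_real W) \<longlongrightarrow> \<i> * complex_of_real W - \<i> * complex_of_real W) (at 0)"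
      unfolding c_def by (intro tendsto_diff ctlim tendsto_const)
    hence "((\<lambda>t. c t - \<i> * complex_of_real W) \<longlongrightarrow> 0) (at 0)" by simp
    thus ?thesis by (rule tendsto_norm_zero)
  qed
  have "((\<lambda>t. anorm (G t) + cmod (c t - \<i> * complex_of_real W) * anorm PX) \<longlongrightarrow> 0 + 0 * anorm PX) (at 0)"
    by (rule tendsto_add[OF lim tendsto_mult[OF climit tendsto_const]])
  hence "V \<le> 0 + 0 * anorm PX"
    by (rule tendsto_lowerbound) (auto simp: bound trivial_limit_at)
  moreover have "0 \<le> V" unfolding V_def by (intro anorm_nonneg uhf_adiff uhf_ascale PX PY)
  ultimately show ?thesis unfolding V_def W_def PX_def PY_def by simp
qed

lemma gen_sector_norm: assumes g: "is_gen lam X Y" and e: "e \<in> Sec J"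
  shows "anorm (PjS e Y) = \<bar>Om lam J e\<bar> * anorm (PjS e X)"
proof -
  have X: "is_uhf X" and Y: "is_uhf Y" using g unfolding is_gen_def by auto
  define PX where "PX = PjS e X"
  define PY where "PY = PjS e Y"
  define C where "C = ascale (\<i> * complex_of_real (Om lam J e)) PX"
  have PX: "is_uhf PX" unfolding PX_def by (rule uhf_PjS[OF X])
  have PY: "is_uhf PY" unfolding PY_def by (rule uhf_PjS[OF Y])
  have C: "is_uhf C" unfolding C_def by (rule uhf_ascale[OF PX])
  have z: "anorm (adiff PY C) = 0" using gen_sector[OF g e] unfolding C_def PX_def PY_def .
  have nC: "anorm C = \<bar>Om lam J e\<bar> * anorm PX" unfolding C_def using anorm_ascale[OF PX] by (simp add: norm_mult)
  have "anorm PY \<le> anorm (adiff PY C) + anorm C" by (rule anorm_le_adiff[OF PY C])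
  moreover have "anorm C \<le> anorm (adiff C PY) + anorm PY" by (rule anorm_le_adiff[OF C PY])
  ultimately show ?thesis using z nC anorm_adiff_sym[of C PY] unfolding PX_def PY_def by linarith
qed

end


lemma sumPjs: "(\<Sum>e\<in>Sec J. Pjs e a b) = Ejs J a b"
proof (cases "\<forall>i>J. ch a b i = 0")
  case True
  define e0 where "e0 i = (if 1 \<le> i \<and> i \<le> J then ch a b i else 0)" for i
  have e0: "e0 \<in> Sec J" unfolding Sec_def e0_def using ch_range by auto
  have iff: "(\<forall>i\<ge>1. ch a b i = e i) \<longleftrightarrow> e = e0" if "e \<in> Sec J" for e
  proof
    assume h: "\<forall>i\<ge>1. ch a b i = e i"
    show "e = e0"
    proof
      fix i show "e i = e0 i"
        using h that True unfolding e0_def Sec_def by (cases "i = 0") auto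
    qed
  next
    assume "e = e0"
    thus "\<forall>i\<ge>1. ch a b i = e i" using True unfolding e0_def by auto
  qed
  have "(\<Sum>e\<in>Sec J. Pjs e a b) = (\<Sum>e\<in>Sec J. if e0 = e then 1 else 0)"
    unfolding Pjs_def using iff by (intro sum.cong) auto
  also have "\<dots> = 1" using e0 finite_Sec by simp
  finally show ?thesis unfolding Ejs_def using True by simp
next
  case False
  have "Pjs e a b = 0" if "e \<in> Sec J" for e
  proof -
    have "\<not> (\<forall>i\<ge>1. ch a b i = e i)"
    proof
      assume h: "\<forall>i\<ge>1. ch a b i = e i"
      have "\<forall>i>J. ch a b i = 0" using h that unfolding Sec_def by auto
      thus False using False by simp
    qed
    thus ?thesis unfolding Pjs_def by simp
  qed
  thus ?thesis unfolding Ejs_def using False by simp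
qed

lemma decomp: assumes V: "is_uhf V"
  shows "anorm V \<le> (\<Sum>e\<in>Sec J. anorm (PjS e V)) + anorm (adiff V (EjS J V))"
proof (rule LIMSEQ_le[OF uhf_conv[OF V]])
  show "(\<lambda>m. (\<Sum>e\<in>Sec J. opnorm (2^m) (PjS e V m)) + opnorm (2^m) (adiff V (EjS J V) m))
        \<longlonglongrightarrow> (\<Sum>e\<in>Sec J. anorm (PjS e V)) + anorm (adiff V (EjS J V))"
    by (intro tendsto_add tendsto_sum uhf_conv uhf_PjS uhf_adiff uhf_EjS V)
  show "\<exists>N. \<forall>m\<ge>N. opnorm (2^m) (V m) \<le> (\<Sum>e\<in>Sec J. opnorm (2^m) (PjS e V m)) + opnorm (2^m) (adiff V (EjS J V) m)"
  proof (intro exI allI impI)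
    fix m
    have eq: "V m = (\<lambda>a b. adiff V (EjS J V) m a b + (\<Sum>e\<in>Sec J. PjS e V m a b))"
    proof (intro ext)
      fix a b
      have "(\<Sum>e\<in>Sec J. PjS e V m a b) = (\<Sum>e\<in>Sec J. Pjs e a b) * V m a b"
        unfolding PjS_def schur_def by (simp add: sum_distrib_right)
      thus "V m a b = adiff V (EjS J V) m a b + (\<Sum>e\<in>Sec J. PjS e V m a b)"
        unfolding sumPjs adiff_def EjS_def schur_def mdiff_def by simp
    qed
    have "opnorm (2^m) (V m) \<le> opnorm (2^m) (adiff V (EjS J V) m) + opnorm (2^m) (\<lambda>a b. \<Sum>e\<in>Sec J. PjS e V m a b)"
      using opnorm_triangle[of "2^m" "adiff V (EjS J V) m" "\<lambda>a b. \<Sum>e\<in>Sec J. PjS e V m a b"] eq by simp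
    also have "opnorm (2^m) (\<lambda>a b. \<Sum>e\<in>Sec J. PjS e V m a b) \<le> (\<Sum>e\<in>Sec J. opnorm (2^m) (PjS e V m))"
      using opnorm_sum[OF finite_Sec[of J], of "2^m" "\<lambda>e. PjS e V m"] by simp
    finally show "opnorm (2^m) (V m) \<le> (\<Sum>e\<in>Sec J. opnorm (2^m) (PjS e V m)) + opnorm (2^m) (adiff V (EjS J V) m)"
      by simp
  qed
qed

lemma Ejs_emb: "schur (Ejs J) (emb J w) = emb J w"
  unfolding schur_def Ejs_def emb_def using ch_high by (auto simp: fun_eq_iff)

lemma tail: assumes V: "is_uhf V" and e: "e > 0"
  shows "\<exists>J0. \<forall>J\<ge>J0. anorm (adiff V (EjS J V)) \<le> e"
proof -
  obtain N where N: "\<And>n m. N \<le> n \<Longrightarrow> n \<le> m \<Longrightarrow> opnorm (2^m) (mdiff (V m) (emb n (V n))) < e/2"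
    using V e unfolding is_uhf_def by (meson half_gt_zero)
  show ?thesis
  proof (intro exI allI impI)
    fix J assume J: "N \<le> J"
    have "anorm (adiff V (EjS J V)) \<le> 0 * anorm V + e"
    proof (rule anorm_le_ev[OF uhf_adiff[OF V uhf_EjS[OF V]] V])
      fix m assume m: "J \<le> m"
      define W where "W = mdiff (V m) (emb J (V J))"
      have "adiff V (EjS J V) m = mdiff W (schur (Ejs J) W)"
      proof -
        have "schur (Ejs J) W = mdiff (schur (Ejs J) (V m)) (emb J (V J))"
          unfolding W_def using Ejs_emb[of J "V J"] unfolding schur_def mdiff_def
          by (auto simp: fun_eq_iff algebra_simps)
        thus ?thesis unfolding adiff_def EjS_def W_def mdiff_def by (auto simp: fun_eq_iff)
      qed
      hence "opnorm (2^m) (adiff V (EjS J V) m) \<le> opnorm (2^m) W + opnorm (2^m) (schur (Ejs J) W)"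
        by (simp add: opnorm_mdiff)
      also have "\<dots> \<le> opnorm (2^m) W + opnorm (2^m) W" using Ejs_norm by simp
      also have "\<dots> < e" using N[OF J m] unfolding W_def by simp
      finally show "opnorm (2^m) (adiff V (EjS J V) m) \<le> 0 * opnorm (2^m) (V m) + e" by simp
    qed
    thus "anorm (adiff V (EjS J V)) \<le> e" by simp
  qed
qed

lemma tail_conclude: assumes V: "is_uhf V" and h: "\<And>J. J1 \<le> J \<Longrightarrow> anorm V \<le> B + anorm (adiff V (EjS J V))"
  shows "anorm V \<le> B"
proof (rule field_le_epsilon)
  fix e :: real assume e: "e > 0"
  obtain J0 where J0: "\<And>J. J0 \<le> J \<Longrightarrow> anorm (adiff V (EjS J V)) \<le> e" using tail[OF V e] by blast
  show "anorm V \<le> B + e" using h[of "max J0 J1"] J0[of "max J0 J1"] by simp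
qed


lemma lagree_adiff: "lagree A A' \<Longrightarrow> lagree B B' \<Longrightarrow> lagree (adiff A B) (adiff A' B')"
  unfolding lagree_def adiff_def mdiff_def by simp

context lamcond
begin

lemma Om_zero: "Om lam J (\<lambda>_. 0) = 0" unfolding Om_def by simp

lemma cS_zero': "cS S (\<lambda>_. 0) = 0" unfolding cS_def by simp

lemma Om_diff: assumes "k \<le> l" shows "Om lam l e - Om lam k e = cS {k<..l} e"
proof -
  have "{1..l} = {1..k} \<union> {k<..l}" using assms by auto
  hence "Om lam l e = Om lam k e + cS {k<..l} e"
    unfolding Om_def cS_def by (simp add: sum.union_disjoint ivl_disj_int)
  thus ?thesis by simp
qed

lemma part1: assumes g1: "is_gen lam X Y" and g2: "is_gen lam Y Z" shows "anorm Y \<le> anorm Z"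
proof -
  have Y: "is_uhf Y" and Z: "is_uhf Z" using g1 g2 unfolding is_gen_def by auto
  have Z0: "0 \<le> anorm Z" by (rule anorm_nonneg[OF Z])
  have bnd: "anorm (PjS e Y) \<le> anorm Z / \<bar>Om lam J e\<bar>" if e: "e \<in> Sec J" for e J
  proof (cases "e = (\<lambda>_. 0)")
    case True
    thus ?thesis using gen_sector_norm[OF g1 e] by (simp add: Om_zero)
  next
    case False
    have nz: "Om lam J e \<noteq> 0" by (rule Om_nz[OF e False])
    have "\<bar>Om lam J e\<bar> * anorm (PjS e Y) = anorm (PjS e Z)" using gen_sector_norm[OF g2 e] by simp
    also have "\<dots> \<le> anorm Z" by (rule anorm_PjS[OF Z])
    finally show ?thesis using nz by (simp add: field_simps)
  qed
  show ?thesis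
  proof (rule tail_conclude[OF Y, of 0])
    fix J :: nat
    have "anorm Y \<le> (\<Sum>e\<in>Sec J. anorm (PjS e Y)) + anorm (adiff Y (EjS J Y))" by (rule decomp[OF Y])
    also have "(\<Sum>e\<in>Sec J. anorm (PjS e Y)) \<le> (\<Sum>e\<in>Sec J. anorm Z * (1 / \<bar>Om lam J e\<bar>))"
      using bnd by (intro sum_mono) simp
    also have "\<dots> = anorm Z * (\<Sum>e\<in>Sec J. 1 / \<bar>Om lam J e\<bar>)" by (simp add: sum_distrib_left)
    also have "\<dots> \<le> anorm Z * 1" using C1' Z0 by (intro mult_left_mono) auto
    finally show "anorm Y \<le> anorm Z + anorm (adiff Y (EjS J Y))" by simp
  qed
qed

lemma PX_bound: assumes g1: "is_gen lam X Y" and g2: "is_gen lam Y Z" and e: "e \<in> Sec J"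
  and nz: "e \<noteq> (\<lambda>_. 0)"
  shows "anorm (PjS e X) \<le> anorm Z / (Om lam J e)^2"
proof -
  have Z: "is_uhf Z" using g2 unfolding is_gen_def by auto
  have om: "Om lam J e \<noteq> 0" by (rule Om_nz[OF e nz])
  have "(Om lam J e)^2 * anorm (PjS e X) = \<bar>Om lam J e\<bar> * (\<bar>Om lam J e\<bar> * anorm (PjS e X))"
    by (simp add: power2_eq_square abs_mult_self_eq)
  also have "\<dots> = anorm (PjS e Z)" using gen_sector_norm[OF g1 e] gen_sector_norm[OF g2 e] by simp
  also have "\<dots> \<le> anorm Z" by (rule anorm_PjS[OF Z])
  finally show ?thesis using om by (simp add: field_simps)
qed

lemma sector_sum: assumes g1: "is_gen lam X Y" and g2: "is_gen lam Y Z" and V: "is_uhf V"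
  and S: "S \<subseteq> {k<..}" "finite S"
  and h: "\<And>e. e \<in> Sec J \<Longrightarrow> anorm (PjS e V) \<le> \<bar>cS S e\<bar> * anorm (PjS e X)"
  shows "anorm V \<le> (1/2)^k * anorm Z + anorm (adiff V (EjS J V))"
proof -
  have Z: "is_uhf Z" using g2 unfolding is_gen_def by auto
  have Z0: "0 \<le> anorm Z" by (rule anorm_nonneg[OF Z])
  have bnd: "anorm (PjS e V) \<le> anorm Z * (\<bar>cS S e\<bar> / (Om lam J e)^2)" if e: "e \<in> Sec J" for e
  proof (cases "e = (\<lambda>_. 0)")
    case True thus ?thesis using h[OF e] by (simp add: cS_zero')
  next
    case False
    have "anorm (PjS e V) \<le> \<bar>cS S e\<bar> * anorm (PjS e X)" by (rule h[OF e])
    also have "\<dots> \<le> \<bar>cS S e\<bar> * (anorm Z / (Om lam J e)^2)"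
      by (intro mult_left_mono PX_bound[OF g1 g2 e False]) auto
    finally show ?thesis by (simp add: mult.commute)
  qed
  have "anorm V \<le> (\<Sum>e\<in>Sec J. anorm (PjS e V)) + anorm (adiff V (EjS J V))" by (rule decomp[OF V])
  also have "(\<Sum>e\<in>Sec J. anorm (PjS e V)) \<le> (\<Sum>e\<in>Sec J. anorm Z * (\<bar>cS S e\<bar> / (Om lam J e)^2))"
    using bnd by (intro sum_mono) simp
  also have "\<dots> = anorm Z * (\<Sum>e\<in>Sec J. \<bar>cS S e\<bar> / (Om lam J e)^2)" by (simp add: sum_distrib_left)
  also have "\<dots> \<le> anorm Z * (1/2)^k" using C2[OF S] Z0 by (intro mult_left_mono) auto
  finally show ?thesis by (simp add: mult.commute)
qed

lemma part2: assumes g1: "is_gen lam X Y" and g2: "is_gen lam Y Z" and kl: "k \<le> l"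
  shows "anorm (adiff (delta lam l X) (delta lam k X)) \<le> (1/2)^k * anorm Z"
proof -
  have X: "is_uhf X" using g1 unfolding is_gen_def by auto
  define V where "V = adiff (delta lam l X) (delta lam k X)"
  have V: "is_uhf V" unfolding V_def by (intro uhf_adiff uhf_delta nonneg X)
  have h: "anorm (PjS e V) \<le> \<bar>cS {k<..l} e\<bar> * anorm (PjS e X)" for e
  proof -
    have PX: "is_uhf (PjS e X)" by (rule uhf_PjS[OF X])
    have "anorm (PjS e V) = anorm (adiff (ascale (\<i> * complex_of_real (Om lam l e)) (PjS e X)) (ascale (\<i> * complex_of_real (Om lam k e)) (PjS e X)))"
      unfolding V_def PjS_adiff by (intro anorm_cong lagree_adiff PjS_delta)
    also have "\<dots> = cmod (\<i> * complex_of_real (Om lam l e) - \<i> * complex_of_real (Om lam k e)) * anorm (PjS e X)"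
      unfolding adiff_ascale by (rule anorm_ascale[OF PX])
    also have "cmod (\<i> * complex_of_real (Om lam l e) - \<i> * complex_of_real (Om lam k e)) = \<bar>Om lam l e - Om lam k e\<bar>"
      by (simp add: right_diff_distrib[symmetric] norm_mult flip: of_real_diff)
    finally show ?thesis using Om_diff[OF kl, of e] by simp
  qed
  have "anorm V \<le> (1/2)^k * anorm Z + anorm (adiff V (EjS J V))" for J
  proof (rule sector_sum[OF g1 g2 V, where S="{k<..l}" and k=k])
    show "{k<..l} \<subseteq> {k<..}" by auto
    show "finite {k<..l}" by simp
    fix e assume "e \<in> Sec J"
    show "anorm (PjS e V) \<le> \<bar>cS {k<..l} e\<bar> * anorm (PjS e X)" by (rule h)
  qed
  hence "anorm V \<le> (1/2)^k * anorm Z" by (rule tail_conclude[OF V, of 0])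
  thus ?thesis unfolding V_def .
qed

lemma part3_bound: assumes g1: "is_gen lam X Y" and g2: "is_gen lam Y Z"
  shows "anorm (adiff (delta lam l X) Y) \<le> (1/2)^l * anorm Z"
proof -
  have X: "is_uhf X" and Y: "is_uhf Y" using g1 unfolding is_gen_def by auto
  define V where "V = adiff (delta lam l X) Y"
  have V: "is_uhf V" unfolding V_def by (intro uhf_adiff uhf_delta nonneg X Y)
  have "anorm V \<le> (1/2)^l * anorm Z + anorm (adiff V (EjS J V))" if J: "l \<le> J" for J
  proof (rule sector_sum[OF g1 g2 V, where S="{l<..J}" and k=l])
    show "{l<..J} \<subseteq> {l<..}" by auto
    show "finite {l<..J}" by simp
    fix e assume e: "e \<in> Sec J"
    have PX: "is_uhf (PjS e X)" by (rule uhf_PjS[OF X])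
    define C where "C = ascale (\<i> * complex_of_real (Om lam J e)) (PjS e X)"
    have C: "is_uhf C" unfolding C_def by (rule uhf_ascale[OF PX])
    have "anorm (PjS e V) \<le> anorm (adiff (PjS e (delta lam l X)) C) + anorm (adiff C (PjS e Y))"
      unfolding V_def PjS_adiff by (intro anorm_tri uhf_PjS uhf_delta nonneg X Y C)
    also have "anorm (adiff C (PjS e Y)) = 0"
      using gen_sector[OF g1 e] anorm_adiff_sym[of C "PjS e Y"] unfolding C_def by simp
    also have "anorm (adiff (PjS e (delta lam l X)) C) = anorm (adiff (ascale (\<i> * complex_of_real (Om lam l e)) (PjS e X)) C)"
      by (intro anorm_cong lagree_adiff PjS_delta lagree_refl)
    also have "\<dots> = cmod (\<i> * complex_of_real (Om lam l e) - \<i> * complex_of_real (Om lam J e)) * anorm (PjS e X)"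
      unfolding C_def adiff_ascale by (rule anorm_ascale[OF PX])
    also have "cmod (\<i> * complex_of_real (Om lam l e) - \<i> * complex_of_real (Om lam J e)) = \<bar>Om lam J e - Om lam l e\<bar>"
      by (simp add: right_diff_distrib[symmetric] norm_mult abs_minus_commute flip: of_real_diff)
    finally show "anorm (PjS e V) \<le> \<bar>cS {l<..J} e\<bar> * anorm (PjS e X)" using Om_diff[OF J, of e] by simp
  qed
  hence "anorm V \<le> (1/2)^l * anorm Z" by (rule tail_conclude[OF V, of l])
  thus ?thesis unfolding V_def .
qed

lemma part3: assumes g1: "is_gen lam X Y" and g2: "is_gen lam Y Z"
  shows "(\<lambda>l. anorm (adiff (delta lam l X) Y)) \<longlonglongrightarrow> 0"
proof (rule tendsto_sandwich[of "\<lambda>_. 0" _ _ "\<lambda>l. (1/2)^l * anorm Z"])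
  have X: "is_uhf X" and Y: "is_uhf Y" using g1 unfolding is_gen_def by auto
  show "\<forall>\<^sub>F n in sequentially. 0 \<le> anorm (adiff (delta lam n X) Y)"
    by (intro always_eventually allI anorm_nonneg uhf_adiff uhf_delta nonneg X Y)
  show "\<forall>\<^sub>F n in sequentially. anorm (adiff (delta lam n X) Y) \<le> (1/2)^n * anorm Z"
    by (intro always_eventually allI part3_bound[OF g1 g2])
  show "(\<lambda>n. (1/2)^n * anorm Z) \<longlonglongrightarrow> 0"
    using tendsto_mult[OF LIMSEQ_power_zero[of "1/2::real"] tendsto_const[of "anorm Z"]] by simp
qed simp

end


definition xj :: "nat \<Rightarrow> mat" where
  "xj j = site_op j (\<lambda>p q. if p = 0 \<and> q = 1 then 1 else 0)"

lemma xj_val: "xj j a b = (if (\<forall>i. i \<noteq> j - 1 \<longrightarrow> bit a i = bit b i) \<and> \<not> bit a (j - 1) \<and> bit b (j - 1) then 1 else 0)"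
  unfolding xj_def site_op_def by auto

lemma xj_emb: assumes "1 \<le> j" "j \<le> n" shows "emb n (xj j) = xj j"
proof (intro ext)
  fix a b
  show "emb n (xj j) a b = xj j a b"
  proof (cases "a div 2^n = b div 2^n")
    case True
    have jn: "j - 1 < n" using assms by simp
    have c1: "(\<forall>i. i \<noteq> j - 1 \<longrightarrow> bit (a mod 2^n) i = bit (b mod 2^n) i) \<longleftrightarrow> (\<forall>i. i \<noteq> j - 1 \<longrightarrow> bit a i = bit b i)"
    proof
      assume h: "\<forall>i. i \<noteq> j - 1 \<longrightarrow> bit (a mod 2^n) i = bit (b mod 2^n) i"
      show "\<forall>i. i \<noteq> j - 1 \<longrightarrow> bit a i = bit b i"
      proof (intro allI impI)
        fix i assume i: "i \<noteq> j - 1"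
        show "bit a i = bit b i"
        proof (cases "i < n")
          case True thus ?thesis using h[rule_format, OF i] by (simp add: bit_mod_pow)
        next
          case False thus ?thesis using bit_high_eq[OF \<open>a div 2^n = b div 2^n\<close>, of i] by simp
        qed
      qed
    next
      assume "\<forall>i. i \<noteq> j - 1 \<longrightarrow> bit a i = bit b i"
      thus "\<forall>i. i \<noteq> j - 1 \<longrightarrow> bit (a mod 2^n) i = bit (b mod 2^n) i" by (simp add: bit_mod_pow)
    qed
    have c2: "bit (a mod 2^n) (j - 1) = bit a (j - 1)" "bit (b mod 2^n) (j - 1) = bit b (j - 1)"
      using jn by (simp_all add: bit_mod_pow)
    show ?thesis unfolding emb_def using True by (simp only: xj_val c1 c2) simp
  next
    case False
    have "\<not> (\<forall>i. i \<noteq> j - 1 \<longrightarrow> bit a i = bit b i)"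
    proof
      assume h: "\<forall>i. i \<noteq> j - 1 \<longrightarrow> bit a i = bit b i"
      have "bit (a div 2^n) k = bit (b div 2^n) k" for k
      proof -
        have "n + k \<noteq> j - 1" using assms by simp
        thus ?thesis using h by (simp add: bit_div_pow)
      qed
      hence "a div 2^n = b div 2^n" by (simp add: bit_eq_iff)
      thus False using False by simp
    qed
    thus ?thesis unfolding emb_def using False by (simp add: xj_val)
  qed
qed

lemma uhf_xj: assumes "1 \<le> j" shows "is_uhf (\<lambda>m. xj j)"
  unfolding is_uhf_def
proof (intro allI impI exI)
  fix e :: real and n m assume e: "e > 0" and nm: "j \<le> n \<and> n \<le> m"
  have "mdiff (xj j) (emb n (xj j)) = (\<lambda>a b. 0)" using xj_emb[OF assms] nm unfolding mdiff_def by auto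
  thus "opnorm (2^m) (mdiff (xj j) (emb n (xj j))) < e" using e by (simp add: opnorm_zero)
qed

lemma sum_single_site: fixes m :: nat assumes "j \<in> {1..m}" "\<And>i. i \<in> {1..m} \<Longrightarrow> i \<noteq> j \<Longrightarrow> f i = 0"
  shows "(\<Sum>i\<in>{1..m}. f i) = (f j :: real)"
proof -
  have "(\<Sum>i\<in>{1..m}. f i) = (\<Sum>i\<in>{j}. f i)"
    using assms by (intro sum.mono_neutral_right) auto
  thus ?thesis by simp
qed

lemma alpha_xj: assumes "1 \<le> j" "a < 2^m" "b < 2^m"
  shows "alpha lam t (\<lambda>m. xj j) m a b = exp (\<i> * complex_of_real (t * lam j)) * xj j a b"
proof -
  have al: "alpha lam t (\<lambda>m. xj j) m a b = asym lam t m a b * xj j a b"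
    using alpha_agree[of lam t "\<lambda>m. xj j"] assms(2,3) unfolding lagree_def schur_def by simp
  show ?thesis
  proof (cases "(\<forall>i. i \<noteq> j - 1 \<longrightarrow> bit a i = bit b i) \<and> \<not> bit a (j - 1) \<and> bit b (j - 1)")
    case True
    have jm: "j \<le> m"
    proof (rule ccontr)
      assume "\<not> j \<le> m"
      hence "m \<le> j - 1" by simp
      thus False using bit_small[OF assms(3)] True by blast
    qed
    have "En lam m a - En lam m b = (\<Sum>i\<in>{1..m}. lam i * of_int (ch a b i))" by (rule En_diff)
    also have "\<dots> = lam j * of_int (ch a b j)"
    proof (rule sum_single_site)
      show "j \<in> {1..m}" using assms(1) jm by simp
      fix i assume "i \<in> {1..m}" "i \<noteq> j"
      hence "i - 1 \<noteq> j - 1" using assms(1) by auto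
      hence "ch a b i = 0" using True unfolding ch_def by simp
      thus "lam i * of_int (ch a b i) = 0" by simp
    qed
    also have "ch a b j = 1" using True unfolding ch_def by simp
    finally have "En lam m a - En lam m b = lam j" by simp
    thus ?thesis using al unfolding asym_def by simp
  next
    case False
    have "xj j a b = 0" by (subst xj_val) (rule if_not_P[OF False])
    thus ?thesis using al by simp
  qed
qed

lemma gen_xj: assumes "1 \<le> j"
  shows "is_gen lam (\<lambda>m. xj j) (ascale (\<i> * complex_of_real (lam j)) (\<lambda>m. xj j))"
proof -
  define X where "X = (\<lambda>m::nat. xj j)"
  have X: "is_uhf X" unfolding X_def by (rule uhf_xj[OF assms])
  define c where "c t = complex_of_real (1/t) * (exp (\<i> * complex_of_real (t * lam j)) - 1)" for t
  have eq: "anorm (adiff (ascale (complex_of_real (1/t)) (adiff (alpha lam t X) X)) (ascale (\<i> * complex_of_real (lam j)) X))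
           = cmod (c t - \<i> * complex_of_real (lam j)) * anorm X" for t
  proof -
    have "lagree (adiff (ascale (complex_of_real (1/t)) (adiff (alpha lam t X) X)) (ascale (\<i> * complex_of_real (lam j)) X))
                 (ascale (c t - \<i> * complex_of_real (lam j)) X)"
      unfolding lagree_def
    proof (intro allI impI)
      fix m a b :: nat assume ab: "a < 2^m" "b < 2^m"
      show "adiff (ascale (complex_of_real (1/t)) (adiff (alpha lam t X) X)) (ascale (\<i> * complex_of_real (lam j)) X) m a b
            = ascale (c t - \<i> * complex_of_real (lam j)) X m a b"
        unfolding adiff_def ascale_def mdiff_def c_def X_def using alpha_xj[OF assms ab, of lam t]
        by (simp add: algebra_simps)
    qed
    thus ?thesis using anorm_cong anorm_ascale[OF X] by metis
  qed
  have lim: "((\<lambda>t. cmod (c t - \<i> * complex_of_real (lam j)) * anorm X) \<longlongrightarrow> 0 * anorm X) (at 0)"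
  proof (rule tendsto_mult[OF _ tendsto_const])
    have "((\<lambda>t. c t - \<i> * complex_of_real (lam j)) \<longlongrightarrow> \<i> * complex_of_real (lam j) - \<i> * complex_of_real (lam j)) (at 0)"
      unfolding c_def by (intro tendsto_diff ctlim tendsto_const)
    hence "((\<lambda>t. c t - \<i> * complex_of_real (lam j)) \<longlongrightarrow> 0) (at 0)" by simp
    thus "((\<lambda>t. cmod (c t - \<i> * complex_of_real (lam j))) \<longlongrightarrow> 0) (at 0)" by (rule tendsto_norm_zero)
  qed
  show ?thesis unfolding is_gen_def X_def[symmetric]
    using X uhf_ascale[OF X] lim eq by simp
qed

lemma xj_0: assumes "1 \<le> j" shows "xj j 0 (2^(j-1)) = 1"
  unfolding xj_val by (auto simp: bit_exp_iff)

lemma anorm_xj: assumes "1 \<le> j" shows "1 \<le> anorm (\<lambda>m. xj j)"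
proof (rule LIMSEQ_le_const[OF uhf_conv[OF uhf_xj[OF assms]]])
  show "\<exists>N. \<forall>m\<ge>N. 1 \<le> opnorm (2^m) (xj j)"
  proof (intro exI allI impI)
    fix m assume m: "j \<le> m"
    define v where "v b = (if b = 2^(j-1) then 1 else (0::complex))" for b :: nat
    have lt: "(2::nat)^(j-1) < 2^m" using m assms by (intro power_strict_increasing) auto
    have nv: "ns (2^m) v = 1"
    proof -
      have "ns (2^m) v = (\<Sum>b\<in>{2^(j-1)}. (cmod (v b))\<^sup>2)"
        unfolding ns_def using lt by (intro sum.mono_neutral_right) (auto simp: v_def)
      thus ?thesis by (simp add: v_def)
    qed
    have mv0: "mv (2^m) (xj j) v 0 = 1"
    proof -
      have "mv (2^m) (xj j) v 0 = (\<Sum>b\<in>{2^(j-1)}. xj j 0 b * v b)"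
        unfolding mv_def using lt by (intro sum.mono_neutral_right) (auto simp: v_def)
      thus ?thesis using xj_0[OF assms] by (simp add: v_def)
    qed
    have "1 = (cmod (mv (2^m) (xj j) v 0))\<^sup>2" using mv0 by simp
    also have "\<dots> \<le> ns (2^m) (mv (2^m) (xj j) v)"
      unfolding ns_def by (rule member_le_sum) auto
    finally have "1 \<le> sqrt (ns (2^m) (mv (2^m) (xj j) v))" by simp
    also have "\<dots> \<le> opnorm (2^m) (xj j)" by (rule opnorm_upper) (simp add: nv)
    finally show "1 \<le> opnorm (2^m) (xj j)" .
  qed
qed

context lamcond
begin

lemma unbounded: "\<not> (\<exists>C. \<forall>X Y. is_gen lam X Y \<longrightarrow> anorm Y \<le> C * anorm X)"
proof
  assume "\<exists>C. \<forall>X Y. is_gen lam X Y \<longrightarrow> anorm Y \<le> C * anorm X"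
  then obtain C where C: "\<And>X Y. is_gen lam X Y \<Longrightarrow> anorm Y \<le> C * anorm X" by blast
  define j where "j = Suc (nat \<lceil>C\<rceil>)"
  have j1: "1 \<le> j" unfolding j_def by simp
  have "lam j \<ge> 2 * (\<Sum>i\<in>{1..<j}. lam i) + 6 ^ j" using grow j1 by simp
  moreover have "0 \<le> (\<Sum>i\<in>{1..<j}. lam i)" using nonneg by (auto intro!: sum_nonneg)
  ultimately have l6: "lam j \<ge> 6 ^ j" by simp
  have "real j < 2 ^ j" by (rule of_nat_less_two_power)
  also have "(2::real) ^ j \<le> 6 ^ j" by (intro power_mono) auto
  finally have "real j < lam j" using l6 by linarith
  moreover have "C < real j" unfolding j_def by linarith
  ultimately have Cl: "C < lam j" by simp
  define X where "X = (\<lambda>m::nat. xj j)"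
  have X: "is_uhf X" unfolding X_def by (rule uhf_xj[OF j1])
  have aX: "1 \<le> anorm X" unfolding X_def by (rule anorm_xj[OF j1])
  have g: "is_gen lam X (ascale (\<i> * complex_of_real (lam j)) X)" unfolding X_def by (rule gen_xj[OF j1])
  have "anorm (ascale (\<i> * complex_of_real (lam j)) X) = lam j * anorm X"
  proof -
    have "lam j > 0" using pos j1 by simp
    thus ?thesis using anorm_ascale[OF X, of "\<i> * complex_of_real (lam j)"] by (simp add: norm_mult)
  qed
  hence "lam j * anorm X \<le> C * anorm X" using C[OF g] by simp
  hence "lam j \<le> C" using aX by (simp add: mult_le_cancel_right)
  thus False using Cl by simp
qed

end



theorem mainTheorem9:
  fixes lam :: "nat \<Rightarrow> real"
  assumes "\<forall>i\<ge>1. lam i > 0"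
    and "\<forall>n\<ge>1. lam n \<ge> 2 * (\<Sum>i\<in>{1..<n}. lam i) + 6 ^ n"
  shows "(\<forall>X Y Z. is_gen lam X Y \<and> is_gen lam Y Z \<longrightarrow>
            anorm Y \<le> anorm Z
          \<and> (\<forall>k l. 1 \<le> k \<and> k \<le> l \<longrightarrow>
               anorm (adiff (delta lam l X) (delta lam k X)) \<le> (1 / 2) ^ k * anorm Z)
          \<and> (\<lambda>l. anorm (adiff (delta lam l X) Y)) \<longlonglongrightarrow> 0)
       \<and> \<not> (\<exists>C. \<forall>X Y. is_gen lam X Y \<longrightarrow> anorm Y \<le> C * anorm X)"
proof -
  interpret lamcond lam using assms by unfold_locales
  have A: "(\<forall>X Y Z. is_gen lam X Y \<and> is_gen lam Y Z \<longrightarrow>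
            anorm Y \<le> anorm Z
          \<and> (\<forall>k l. 1 \<le> k \<and> k \<le> l \<longrightarrow>
               anorm (adiff (delta lam l X) (delta lam k X)) \<le> (1 / 2) ^ k * anorm Z)
          \<and> (\<lambda>l. anorm (adiff (delta lam l X) Y)) \<longlonglongrightarrow> 0)"
  proof (intro allI impI)
    fix X Y Z assume h: "is_gen lam X Y \<and> is_gen lam Y Z"
    hence g1: "is_gen lam X Y" and g2: "is_gen lam Y Z" by simp_all
    have p2: "\<forall>k l. 1 \<le> k \<and> k \<le> l \<longrightarrow>
               anorm (adiff (delta lam l X) (delta lam k X)) \<le> (1 / 2) ^ k * anorm Z"
    proof (intro allI impI)
      fix k l :: nat assume "1 \<le> k \<and> k \<le> l"
      hence "k \<le> l" by simp
      thus "anorm (adiff (delta lam l X) (delta lam k X)) \<le> (1 / 2) ^ k * anorm Z"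
        by (rule part2[OF g1 g2])
    qed
    show "anorm Y \<le> anorm Z
          \<and> (\<forall>k l. 1 \<le> k \<and> k \<le> l \<longrightarrow>
               anorm (adiff (delta lam l X) (delta lam k X)) \<le> (1 / 2) ^ k * anorm Z)
          \<and> (\<lambda>l. anorm (adiff (delta lam l X) Y)) \<longlonglongrightarrow> 0"
      using part1[OF g1 g2] p2 part3[OF g1 g2] by simp
  qed
  show ?thesis by (rule conjI[OF A unbounded])
qed

end
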